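(* For any finite simple graph $G$ of order $n$ with $v_{even}(G)=2$, there is $f\in\mathrm{SEDF}^0(G)$ such that $f(G)\le n-1$; hence $\gamma_s'(G)\le n-1$.
   Context: For $f:E(G)\to\{1,-1\}$, $f(G)=\sum_{e\in E(G)}f(e)$ and $f(v)=\sum_{e\in E_G(v)}f(e)$, where $E_G(v)$ is the set of edges incident with $v$. $\mathrm{SEDF}^0(G)$ is the set of functions $f:E(G)\to\{1,-1\}$ such that (a) $f(v)\ge 0$ for all $v\in V(G)$, and (b) $f(u)+f(v)\ge 2$ for every edge $uv$ with $f(uv)=1$. A signed edge domination function (SEDF) is $f:E(G)\to\{1,-1\}$ with $\sum_{e'\in E_G(u)\cup E_G(v)}f(e')\ge1$ for every edge $uv$; $\gamma_s'(G)$ is the minimum of $f(G)$ over all SEDFs. $v_{even}(G)$ is the number of vertices of even degree in $G$. *)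

theory Defs
  imports Main
begin

definition simple_graph :: "'a set \<Rightarrow> 'a set set \<Rightarrow> bool" where
  "simple_graph V E \<longleftrightarrow> finite V \<and>
     E \<subseteq> {{u, v} | u v. u \<in> V \<and> v \<in> V \<and> u \<noteq> v}"

definition inc_edges :: "'a set set \<Rightarrow> 'a \<Rightarrow> 'a set set" where
  "inc_edges E v = {e \<in> E. v \<in> e}"

definition degree :: "'a set set \<Rightarrow> 'a \<Rightarrow> nat" where
  "degree E v = card (inc_edges E v)"

definition v_even :: "'a set \<Rightarrow> 'a set set \<Rightarrow> nat" where
  "v_even V E = card {v \<in> V. even (degree E v)}"

definition fG :: "'a set set \<Rightarrow> ('a set \<Rightarrow> int) \<Rightarrow> int" where
  "fG E f = (\<Sum>e\<in>E. f e)"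

definition fv :: "'a set set \<Rightarrow> ('a set \<Rightarrow> int) \<Rightarrow> 'a \<Rightarrow> int" where
  "fv E f v = (\<Sum>e\<in>inc_edges E v. f e)"

definition pm_one :: "'a set set \<Rightarrow> ('a set \<Rightarrow> int) \<Rightarrow> bool" where
  "pm_one E f \<longleftrightarrow> (\<forall>e\<in>E. f e = 1 \<or> f e = -1)"

definition SEDF0 :: "'a set \<Rightarrow> 'a set set \<Rightarrow> ('a set \<Rightarrow> int) set" where
  "SEDF0 V E = {f. pm_one E f \<and> (\<forall>v\<in>V. fv E f v \<ge> 0) \<and>
      (\<forall>u v. {u, v} \<in> E \<and> f {u, v} = 1 \<longrightarrow> fv E f u + fv E f v \<ge> 2)}"

definition is_SEDF :: "'a set set \<Rightarrow> ('a set \<Rightarrow> int) \<Rightarrow> bool" where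
  "is_SEDF E f \<longleftrightarrow> pm_one E f \<and>
     (\<forall>u v. {u, v} \<in> E \<longrightarrow> (\<Sum>e\<in>inc_edges E u \<union> inc_edges E v. f e) \<ge> 1)"

(* gamma_s'(G): minimum of f(G) over all SEDFs (the set of values is finite) *)
definition gamma_s' :: "'a set set \<Rightarrow> int" where
  "gamma_s' E = Min (fG E ` {f. is_SEDF E f})"

end

theory Submission
  imports Defs
begin

lemma sg_finE: "simple_graph V E \<Longrightarrow> finite E"
proof -
  assume s: "simple_graph V E"
  have "E \<subseteq> Pow V" using s unfolding simple_graph_def by auto
  moreover have "finite V" using s unfolding simple_graph_def by auto
  ultimately show ?thesis by (meson finite_Pow_iff finite_subset)
qed

lemma sg_finV: "simple_graph V E \<Longrightarrow> finite V"
  unfolding simple_graph_def by auto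

lemma sg_edge: "simple_graph V E \<Longrightarrow> e \<in> E \<Longrightarrow> \<exists>u w. e = {u,w} \<and> u \<noteq> w \<and> u \<in> V \<and> w \<in> V"
proof -
  assume "simple_graph V E" "e \<in> E"
  then have "e \<in> {{u, v} |u v. u \<in> V \<and> v \<in> V \<and> u \<noteq> v}" unfolding simple_graph_def by (meson subsetD)
  then obtain u w where "e = {u,w}" "u \<in> V" "w \<in> V" "u \<noteq> w" by auto
  then show ?thesis by auto
qed

lemma sg_mem: "simple_graph V E \<Longrightarrow> {u,w} \<in> E \<Longrightarrow> u \<noteq> w \<and> u \<in> V \<and> w \<in> V"
proof -
  assume s: "simple_graph V E" and e: "{u,w} \<in> E"
  obtain a b where ab: "{u,w} = {a,b}" "a \<noteq> b" "a \<in> V" "b \<in> V" using sg_edge[OF s e] by blast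
  then show ?thesis by (auto simp: doubleton_eq_iff)
qed

definition nb :: "'a set set \<Rightarrow> 'a \<Rightarrow> 'a set" where
  "nb E v = {w. {v,w} \<in> E}"

lemma nb_sym: "w \<in> nb E v \<longleftrightarrow> v \<in> nb E w"
  unfolding nb_def by (simp add: insert_commute)

lemma nb_sub: "simple_graph V E \<Longrightarrow> nb E v \<subseteq> V"
proof
  fix w assume s: "simple_graph V E" and "w \<in> nb E v"
  then have "{v,w} \<in> E" unfolding nb_def by (simp only: mem_Collect_eq)
  from sg_mem[OF s this] show "w \<in> V" by simp
qed

lemma nb_fin: "simple_graph V E \<Longrightarrow> finite (nb E v)"
  using nb_sub[of V E v] sg_finV[of V E] by (rule finite_subset)

lemma nb_irr: "simple_graph V E \<Longrightarrow> v \<notin> nb E v"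
proof
  assume s: "simple_graph V E" and "v \<in> nb E v"
  then have "{v,v} \<in> E" unfolding nb_def by (simp only: mem_Collect_eq)
  from sg_mem[OF s this] show False by simp
qed

lemma inc_nb: "simple_graph V E \<Longrightarrow> inc_edges E v = (\<lambda>w. {v,w}) ` nb E v"
proof
  assume s: "simple_graph V E"
  show "inc_edges E v \<subseteq> (\<lambda>w. {v,w}) ` nb E v"
  proof
    fix e assume "e \<in> inc_edges E v"
    then have e: "e \<in> E" "v \<in> e" unfolding inc_edges_def by auto
    obtain a b where ab: "e = {a,b}" using sg_edge[OF s e(1)] by blast
    show "e \<in> (\<lambda>w. {v,w}) ` nb E v"
    proof (cases "v = a")
      case True then show ?thesis using e ab unfolding nb_def by auto
    next
      case False then have "v = b" using e ab by auto
      then show ?thesis using e ab unfolding nb_def by (auto simp: insert_commute)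
    qed
  qed
  show "(\<lambda>w. {v,w}) ` nb E v \<subseteq> inc_edges E v"
    unfolding nb_def inc_edges_def by auto
qed

lemma inj_dbl: "inj_on (\<lambda>w. {v,w}) S"
  by (auto simp: inj_on_def doubleton_eq_iff)

lemma deg_nb: "simple_graph V E \<Longrightarrow> degree E v = card (nb E v)"
  unfolding degree_def by (simp add: inc_nb card_image[OF inj_dbl])

lemma deg0_noedge: "simple_graph V E \<Longrightarrow> degree E v = 0 \<Longrightarrow> {v,w} \<notin> E"
proof
  assume s: "simple_graph V E" and d: "degree E v = 0" and e: "{v,w} \<in> E"
  have "w \<in> nb E v" using e unfolding nb_def by simp
  then have "nb E v \<noteq> {}" by blast
  then have "card (nb E v) \<noteq> 0" using nb_fin[OF s] by simp
  then show False using d deg_nb[OF s] by simp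
qed

definition lab :: "'a set set \<Rightarrow> ('a set \<Rightarrow> int) \<Rightarrow> ('a set \<Rightarrow> int) \<Rightarrow> 'a set \<Rightarrow> int" where
  "lab F g f = (\<lambda>e. if e \<in> F then g e else f e)"

definition dl :: "'a set set \<Rightarrow> ('a set \<Rightarrow> int) \<Rightarrow> 'a \<Rightarrow> int" where
  "dl F g w = (\<Sum>e\<in>F. if w \<in> e then g e else 0)"

lemma dl_empty[simp]: "dl {} g w = 0"
  unfolding dl_def by simp

lemma dl_insert[simp]: "finite F \<Longrightarrow> e \<notin> F \<Longrightarrow> dl (insert e F) g w = (if w \<in> e then g e else 0) + dl F g w"
  unfolding dl_def by simp

lemma dl_union: "finite A \<Longrightarrow> finite B \<Longrightarrow> A \<inter> B = {} \<Longrightarrow> dl (A \<union> B) g w = dl A g w + dl B g w"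
  unfolding dl_def by (simp add: sum.union_disjoint)

lemma fv_lab:
  assumes "finite E" "F \<subseteq> E"
  shows "fv E (lab F g f) w = fv (E - F) f w + dl F g w"
proof -
  have fF: "finite F" using assms finite_subset by blast
  have un: "inc_edges E w = inc_edges (E - F) w \<union> {e\<in>F. w \<in> e}" using assms(2) by (auto simp: inc_edges_def)
  have dis: "inc_edges (E - F) w \<inter> {e\<in>F. w \<in> e} = {}" by (auto simp: inc_edges_def)
  have f1: "finite (inc_edges (E - F) w)" using assms(1) by (simp add: inc_edges_def)
  have f2: "finite {e\<in>F. w \<in> e}" using fF by simp
  have "fv E (lab F g f) w = (\<Sum>e\<in>inc_edges (E - F) w. lab F g f e) + (\<Sum>e\<in>{e\<in>F. w \<in> e}. lab F g f e)"
    unfolding fv_def un using sum.union_disjoint[OF f1 f2 dis] by simp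
  also have "(\<Sum>e\<in>inc_edges (E - F) w. lab F g f e) = fv (E - F) f w"
    unfolding fv_def lab_def by (rule sum.cong) (auto simp: inc_edges_def)
  also have "(\<Sum>e\<in>{e\<in>F. w \<in> e}. lab F g f e) = (\<Sum>e\<in>{e\<in>F. w \<in> e}. g e)"
    unfolding lab_def by (rule sum.cong) auto
  also have "\<dots> = dl F g w" unfolding dl_def using sum.inter_filter[OF fF] by simp
  finally show ?thesis .
qed

lemma fG_lab:
  assumes "finite E" "F \<subseteq> E"
  shows "fG E (lab F g f) = fG (E - F) f + sum g F"
proof -
  have fF: "finite F" using assms finite_subset by blast
  have un: "E = (E - F) \<union> F" using assms(2) by auto
  have "fG E (lab F g f) = (\<Sum>e\<in>E - F. lab F g f e) + (\<Sum>e\<in>F. lab F g f e)"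
    unfolding fG_def by (subst un) (rule sum.union_disjoint, use assms fF in auto)
  also have "(\<Sum>e\<in>E - F. lab F g f e) = fG (E - F) f" unfolding fG_def lab_def by (rule sum.cong) auto
  also have "(\<Sum>e\<in>F. lab F g f e) = sum g F" unfolding lab_def by (rule sum.cong) auto
  finally show ?thesis .
qed

lemma pm_lab: "pm_one (E - F) f \<Longrightarrow> (\<forall>e\<in>F. g e = 1 \<or> g e = -1) \<Longrightarrow> pm_one E (lab F g f)"
  unfolding pm_one_def lab_def by auto

lemma deg_lab:
  assumes "finite E" "F \<subseteq> E"
  shows "int (degree E w) = int (degree (E - F) w) + dl F (\<lambda>_. 1) w"
proof -
  have fF: "finite F" using assms finite_subset by blast
  have un: "inc_edges E w = inc_edges (E - F) w \<union> {e\<in>F. w \<in> e}" using assms(2) by (auto simp: inc_edges_def)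
  have dis: "inc_edges (E - F) w \<inter> {e\<in>F. w \<in> e} = {}" by (auto simp: inc_edges_def)
  have f1: "finite (inc_edges (E - F) w)" using assms(1) by (simp add: inc_edges_def)
  have f2: "finite {e\<in>F. w \<in> e}" using fF by simp
  have "degree E w = degree (E - F) w + card {e\<in>F. w \<in> e}"
    unfolding degree_def un using card_Un_disjoint[OF f1 f2 dis] by simp
  moreover have "int (card {e\<in>F. w \<in> e}) = dl F (\<lambda>_. 1) w"
    unfolding dl_def using sum.inter_filter[OF fF, of "\<lambda>_. (1::int)"] by simp
  ultimately show ?thesis by simp
qed

lemma sum_pm_parity: "finite S \<Longrightarrow> (\<forall>e\<in>S. f e = 1 \<or> f e = (-1::int)) \<Longrightarrow> even (sum f S + int (card S))"
proof (induction S rule: finite_induct)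
  case empty then show ?case by simp
next
  case (insert a S)
  then have "even (sum f S + int (card S))" by simp
  moreover have "f a = 1 \<or> f a = -1" using insert by simp
  ultimately show ?case using insert by auto
qed

lemma fv_parity: "finite E \<Longrightarrow> pm_one E f \<Longrightarrow> even (fv E f w + int (degree E w))"
  unfolding fv_def degree_def pm_one_def inc_edges_def
  by (rule sum_pm_parity) auto

lemma fG_parity: "finite E \<Longrightarrow> pm_one E f \<Longrightarrow> even (fG E f + int (card E))"
  unfolding fG_def pm_one_def by (rule sum_pm_parity) auto

lemma odd_ge1: "finite E \<Longrightarrow> pm_one E f \<Longrightarrow> odd (degree E w) \<Longrightarrow> 0 \<le> fv E f w \<Longrightarrow> 1 \<le> fv E f w"
  using fv_parity[of E f w] by (cases "fv E f w = 0") auto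

lemma even_ge2: "finite E \<Longrightarrow> pm_one E f \<Longrightarrow> even (degree E w) \<Longrightarrow> 1 \<le> fv E f w \<Longrightarrow> 2 \<le> fv E f w"
  using fv_parity[of E f w] by (cases "fv E f w = 1") auto

lemma sg_sub: "simple_graph V E \<Longrightarrow> simple_graph V (E - F)"
  unfolding simple_graph_def by auto

lemma sg_del:
  assumes s: "simple_graph V E" and h: "\<forall>e\<in>E. v \<in> e \<longrightarrow> e \<in> F"
  shows "simple_graph (V - {v}) (E - F)"
proof -
  have "E - F \<subseteq> {{a, b} |a b. a \<in> V - {v} \<and> b \<in> V - {v} \<and> a \<noteq> b}"
  proof
    fix e assume e: "e \<in> E - F"
    obtain a b where ab: "e = {a,b}" "a \<noteq> b" "a \<in> V" "b \<in> V" using sg_edge[OF s] e by blast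
    have "v \<notin> e" using h e by blast
    then show "e \<in> {{a, b} |a b. a \<in> V - {v} \<and> b \<in> V - {v} \<and> a \<noteq> b}" using ab by blast
  qed
  then show ?thesis using sg_finV[OF s] unfolding simple_graph_def by simp
qed

lemma fv_noedge: "(\<forall>e\<in>E. w \<notin> e) \<Longrightarrow> fv E f w = 0"
proof -
  assume "\<forall>e\<in>E. w \<notin> e"
  then have "inc_edges E w = {}" unfolding inc_edges_def by auto
  then show ?thesis unfolding fv_def by simp
qed

lemma deg_noedge: "(\<forall>e\<in>E. w \<notin> e) \<Longrightarrow> degree E w = 0"
proof -
  assume "\<forall>e\<in>E. w \<notin> e"
  then have "inc_edges E w = {}" unfolding inc_edges_def by auto
  then show ?thesis unfolding degree_def by simp
qed

lemma dl2: "e1 \<noteq> e2 \<Longrightarrow> dl {e1, e2} g z = (if z \<in> e1 then g e1 else 0) + (if z \<in> e2 then g e2 else 0)"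
  by simp

lemma sum2: "e1 \<noteq> e2 \<Longrightarrow> sum g {e1, e2} = g e1 + g e2"
  by simp

lemma card_del: "finite V \<Longrightarrow> u \<in> V \<Longrightarrow> int (card (V - {u})) = int (card V) - 1"
proof -
  assume a: "finite V" "u \<in> V"
  then have "0 < card V" using card_gt_0_iff by blast
  then show ?thesis using a by (simp add: of_nat_diff)
qed

lemma deg_pos_mem: "simple_graph V E \<Longrightarrow> 1 \<le> degree E x \<Longrightarrow> x \<in> V"
proof -
  assume s: "simple_graph V E" and d: "1 \<le> degree E x"
  then have "nb E x \<noteq> {}" using deg_nb[OF s] by (metis card.empty not_one_le_zero)
  then obtain w where "{x,w} \<in> E" unfolding nb_def by auto
  from sg_mem[OF s this] show ?thesis by simp
qed

lemma deg_nb_ex: "simple_graph V E \<Longrightarrow> 1 \<le> degree E x \<Longrightarrow> \<exists>w. {x,w} \<in> E"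
proof -
  assume s: "simple_graph V E" and d: "1 \<le> degree E x"
  then have "nb E x \<noteq> {}" using deg_nb[OF s] by (metis card.empty not_one_le_zero)
  then show ?thesis unfolding nb_def by auto
qed

lemma deg2_other: "simple_graph V E \<Longrightarrow> 2 \<le> degree E v \<Longrightarrow> \<exists>a. {v,a} \<in> E \<and> a \<noteq> b"
proof -
  assume s: "simple_graph V E" and d: "2 \<le> degree E v"
  have "card (nb E v) \<ge> 2" using d deg_nb[OF s] by simp
  have "\<not> nb E v \<subseteq> {b}"
  proof
    assume "nb E v \<subseteq> {b}"
    then have "card (nb E v) \<le> card {b}" by (intro card_mono) auto
    then show False using \<open>card (nb E v) \<ge> 2\<close> by simp
  qed
  then obtain a where "a \<in> nb E v" "a \<noteq> b" by blast
  then show ?thesis unfolding nb_def by auto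
qed

lemma deg0_inc: "finite E \<Longrightarrow> degree E u = 0 \<Longrightarrow> \<forall>e\<in>E. u \<notin> e"
proof (intro ballI notI)
  fix e assume fin: "finite E" and d: "degree E u = 0" and e: "e \<in> E" "u \<in> e"
  have "finite (inc_edges E u)" using fin by (simp add: inc_edges_def)
  then have "inc_edges E u = {}" using d by (simp add: degree_def)
  then show False using e by (auto simp: inc_edges_def)
qed

definition PS :: "'a set \<Rightarrow> 'a set set \<Rightarrow> 'a \<Rightarrow> ('a set \<Rightarrow> int) \<Rightarrow> bool" where
  "PS V E x f \<longleftrightarrow> pm_one E f \<and> (\<forall>w\<in>V. 0 \<le> fv E f w) \<and> (1 \<le> degree E x \<longrightarrow> 1 \<le> fv E f x)
     \<and> fG E f \<le> int (card V) - 1"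

lemma PS_empty: "simple_graph V {} \<Longrightarrow> V \<noteq> {} \<Longrightarrow> PS V {} x (\<lambda>_. 1)"
proof -
  assume s: "simple_graph V {}" and ne: "V \<noteq> {}"
  have "card V \<ge> 1" using ne sg_finV[OF s] by (simp add: Suc_leI card_gt_0_iff)
  then show ?thesis unfolding PS_def pm_one_def fv_def fG_def degree_def inc_edges_def by simp
qed

lemma PS_iso:
  assumes s: "simple_graph V E" and u: "u \<in> V" and d: "degree E u = 0"
    and IH: "PS (V - {u}) E x f"
  shows "PS V E x f"
proof -
  have fin: "finite E" using sg_finE[OF s] .
  have ne: "\<forall>e\<in>E. u \<notin> e" using deg0_inc[OF fin d] .
  have fu: "fv E f u = 0" using fv_noedge[OF ne] .
  have cd: "int (card (V - {u})) = int (card V) - 1" using card_del[OF sg_finV[OF s] u] .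
  show ?thesis using IH fu cd unfolding PS_def by auto
qed

lemma PS_leaf:
  assumes s: "simple_graph V E" and uw: "{u,w} \<in> E" and d: "degree E u = 1"
    and IH: "PS (V - {u}) (E - {{u,w}}) x f"
  shows "PS V E x (lab {{u,w}} (\<lambda>_. 1) f)"
proof -
  have fin: "finite E" using sg_finE[OF s] .
  have uV: "u \<in> V" and uw_ne: "u \<noteq> w" using sg_mem[OF s uw] by auto
  have nbu: "nb E u = {w}"
  proof -
    have "w \<in> nb E u" using uw unfolding nb_def by simp
    moreover have "card (nb E u) = 1" using d deg_nb[OF s] by simp
    ultimately show ?thesis using nb_fin[OF s] by (metis card_1_singletonE singletonD)
  qed
  have ue: "\<forall>e\<in>E. u \<in> e \<longrightarrow> e \<in> {{u,w}}"
  proof (intro ballI impI)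
    fix e assume e: "e \<in> E" "u \<in> e"
    then have "e \<in> inc_edges E u" by (simp add: inc_edges_def)
    then obtain z where "z \<in> nb E u" "e = {u,z}" using inc_nb[OF s] by blast
    then show "e \<in> {{u,w}}" using nbu by simp
  qed
  have sub: "{{u,w}} \<subseteq> E" using uw by simp
  let ?f = "lab {{u,w}} (\<lambda>_. 1) f"
  have fvf: "\<And>z. fv E ?f z = fv (E - {{u,w}}) f z + (if z \<in> {u,w} then 1 else 0)"
    using fv_lab[OF fin sub] by simp
  have fu0: "fv (E - {{u,w}}) f u = 0" using ue by (intro fv_noedge) blast
  have dg: "\<And>z. int (degree E z) = int (degree (E - {{u,w}}) z) + (if z \<in> {u,w} then 1 else 0)"
    using deg_lab[OF fin sub] by simp
  have cd: "int (card (V - {u})) = int (card V) - 1" using card_del[OF sg_finV[OF s] uV] .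
  have IH': "pm_one (E - {{u,w}}) f" "\<forall>z\<in>V - {u}. 0 \<le> fv (E - {{u,w}}) f z"
     "1 \<le> degree (E - {{u,w}}) x \<longrightarrow> 1 \<le> fv (E - {{u,w}}) f x"
     "fG (E - {{u,w}}) f \<le> int (card (V - {u})) - 1" using IH unfolding PS_def by auto
  have pm: "pm_one E ?f" using pm_lab[OF IH'(1)] by simp
  have a: "\<forall>z\<in>V. 0 \<le> fv E ?f z"
  proof
    fix z assume z: "z \<in> V"
    show "0 \<le> fv E ?f z"
    proof (cases "z = u")
      case True then show ?thesis using fvf[of z] fu0 by simp
    next
      case False then show ?thesis using fvf[of z] IH'(2) z by auto
    qed
  qed
  have dsg: "1 \<le> degree E x \<longrightarrow> 1 \<le> fv E ?f x"
  proof
    assume dx: "1 \<le> degree E x"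
    show "1 \<le> fv E ?f x"
    proof (cases "x \<in> {u,w}")
      case True
      have "0 \<le> fv (E - {{u,w}}) f x"
      proof (cases "x = u")
        case True then show ?thesis using fu0 by simp
      next
        case False then have "x = w" using \<open>x \<in> {u,w}\<close> by simp
        then have "x \<in> V - {u}" using sg_mem[OF s uw] by auto
        then show ?thesis using IH'(2) by auto
      qed
      then show ?thesis using fvf[of x] True by simp
    next
      case False
      then have "1 \<le> degree (E - {{u,w}}) x" using dg[of x] dx by simp
      then show ?thesis using fvf[of x] IH'(3) False by simp
    qed
  qed
  have c: "fG E ?f \<le> int (card V) - 1"
    using fG_lab[OF fin sub, of "\<lambda>_. 1" f] IH'(4) cd by simp
  show ?thesis unfolding PS_def using pm a dsg c by blast
qed

lemma PS_p3:
  assumes s: "simple_graph V E" and va: "{v,a} \<in> E" and vb: "{v,b} \<in> E" and ab: "a \<noteq> b"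
    and da: "2 \<le> degree E a"
    and IH: "PS V (E - {{v,a},{v,b}}) a f"
    and xc: "degree E x = 0 \<or> odd (degree E x) \<or> x = b"
  shows "PS V E x (lab {{v,a},{v,b}} (\<lambda>e. if e = {v,b} then 1 else -1) f)"
proof -
  have fin: "finite E" using sg_finE[OF s] .
  have va': "v \<noteq> a" "v \<in> V" "a \<in> V" using sg_mem[OF s va] by auto
  have vb': "v \<noteq> b" "b \<in> V" using sg_mem[OF s vb] by auto
  have ne: "{v,a} \<noteq> {v,b}" using ab va' vb' by (auto simp: doubleton_eq_iff)
  let ?F = "{{v,a},{v,b}}" and ?g = "\<lambda>e. if e = {v,b} then 1 else (-1::int)"
  let ?f = "lab ?F ?g f" and ?E = "E - {{v,a},{v,b}}"
  have sub: "?F \<subseteq> E" using va vb by simp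
  have gva: "?g {v,a} = -1" using ne by simp
  have fvf: "\<And>z. fv E ?f z = fv ?E f z + ((if z \<in> {v,a} then -1 else 0) + (if z \<in> {v,b} then 1 else 0))"
    using fv_lab[OF fin sub, of ?g f] dl2[OF ne, of ?g] gva ab va'(1) vb'(1) by auto
  have dg: "\<And>z. int (degree E z) = int (degree ?E z) + ((if z \<in> {v,a} then 1 else 0) + (if z \<in> {v,b} then 1 else 0))"
    using deg_lab[OF fin sub] dl2[OF ne, of "\<lambda>_. 1"] by simp
  have IH': "pm_one ?E f" "\<forall>z\<in>V. 0 \<le> fv ?E f z"
     "1 \<le> degree ?E a \<longrightarrow> 1 \<le> fv ?E f a" "fG ?E f \<le> int (card V) - 1" using IH unfolding PS_def by auto
  have pm: "pm_one E ?f" using pm_lab[OF IH'(1)] by simp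
  have a1: "1 \<le> fv ?E f a"
  proof -
    have "int (degree E a) = int (degree ?E a) + 1" using dg[of a] ab va' by simp
    then have "1 \<le> degree ?E a" using da by simp
    then show ?thesis using IH'(3) by simp
  qed
  have a: "\<forall>z\<in>V. 0 \<le> fv E ?f z"
  proof
    fix z assume z: "z \<in> V"
    have "0 \<le> fv ?E f z" using IH'(2) z by simp
    then show "0 \<le> fv E ?f z" using fvf[of z] a1 ab va' vb' by auto
  qed
  have dsg: "1 \<le> degree E x \<longrightarrow> 1 \<le> fv E ?f x"
  proof
    assume dx: "1 \<le> degree E x"
    have xV: "x \<in> V" using deg_pos_mem[OF s dx] .
    show "1 \<le> fv E ?f x"
    proof (cases "x = b")
      case True
      have "0 \<le> fv ?E f x" using IH'(2) xV by simp
      then show ?thesis using fvf[of x] True ab vb' by simp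
    next
      case False
      then have "odd (degree E x)" using xc dx by auto
      moreover have "0 \<le> fv E ?f x" using a xV by simp
      ultimately show ?thesis using odd_ge1[OF fin pm] by simp
    qed
  qed
  have c: "fG E ?f \<le> int (card V) - 1"
    using fG_lab[OF fin sub, of ?g f] IH'(4) sum2[OF ne, of ?g] gva by simp
  show ?thesis unfolding PS_def using pm a dsg c by blast
qed

lemma leaf_edges:
  assumes s: "simple_graph V E" and uw: "{u,w} \<in> E" and d: "degree E u = 1"
  shows "\<forall>e\<in>E. u \<in> e \<longrightarrow> e \<in> {{u,w}}"
proof -
  have nbu: "nb E u = {w}"
  proof -
    have "w \<in> nb E u" using uw unfolding nb_def by simp
    moreover have "card (nb E u) = 1" using d deg_nb[OF s] by simp
    ultimately show ?thesis using nb_fin[OF s] by (metis card_1_singletonE singletonD)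
  qed
  show ?thesis
  proof (intro ballI impI)
    fix e assume e: "e \<in> E" "u \<in> e"
    then have "e \<in> inc_edges E u" by (simp add: inc_edges_def)
    then obtain z where "z \<in> nb E u" "e = {u,z}" using inc_nb[OF s] by blast
    then show "e \<in> {{u,w}}" using nbu by simp
  qed
qed

lemma card_Ediff: "finite E \<Longrightarrow> F \<subseteq> E \<Longrightarrow> F \<noteq> {} \<Longrightarrow> card (E - F) < card E"
  by (metis Diff_subset card_seteq finite_subset Diff_eq_empty_iff double_diff order_refl psubsetI psubset_card_mono)

lemma PhiS: "simple_graph V E \<Longrightarrow> V \<noteq> {} \<Longrightarrow> \<exists>f. PS V E x f"
proof (induction "card V + card E" arbitrary: V E x rule: less_induct)
  case less
  note s = less.prems(1) and ne = less.prems(2)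
  have fin: "finite E" using sg_finE[OF s] .
  have finV: "finite V" using sg_finV[OF s] .
  show ?case
  proof (cases "E = {}")
    case True
    have "PS V {} x (\<lambda>_. 1)" using PS_empty s ne True by simp
    then show ?thesis using True by blast
  next
    case Ene: False
    show ?thesis
    proof (cases "\<exists>u\<in>V. degree E u = 0 \<and> 2 \<le> card V")
      case True
      then obtain u where u: "u \<in> V" "degree E u = 0" "2 \<le> card V" by blast
      have ue: "\<forall>e\<in>E. u \<in> e \<longrightarrow> e \<in> {}" using deg0_inc[OF fin u(2)] by blast
      have s': "simple_graph (V - {u}) E" using sg_del[OF s ue] by simp
      have ne': "V - {u} \<noteq> {}"
      proof
        assume "V - {u} = {}"
        then have "V \<subseteq> {u}" by blast
        then have "card V \<le> 1" using card_mono[of "{u}" V] by simp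
        then show False using u(3) by simp
      qed
      have lt: "card (V - {u}) + card E < card V + card E" using card_Diff1_less[OF finV u(1)] by simp
      obtain f where "PS (V - {u}) E x f" using less.hyps[OF lt s' ne'] by blast
      then show ?thesis using PS_iso[OF s u(1) u(2)] by blast
    next
      case noiso: False
      show ?thesis
      proof (cases "\<exists>u\<in>V. degree E u = 1")
        case True
        then obtain u where u: "u \<in> V" "degree E u = 1" by blast
        have "\<exists>w. {u,w} \<in> E" using deg_nb_ex[OF s, of u] u(2) by simp
        then obtain w where uw: "{u,w} \<in> E" by blast
        have uw': "u \<noteq> w" "w \<in> V" using sg_mem[OF s uw] by auto
        have s': "simple_graph (V - {u}) (E - {{u,w}})" using sg_del[OF s leaf_edges[OF s uw u(2)]] .
        have ne': "V - {u} \<noteq> {}" using uw' by blast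
        have lt: "card (V - {u}) + card (E - {{u,w}}) < card V + card E"
        proof -
          have "card (V - {u}) < card V" using card_Diff1_less[OF finV u(1)] .
          moreover have "card (E - {{u,w}}) \<le> card E" using fin by (simp add: card_mono)
          ultimately show ?thesis by simp
        qed
        obtain f where "PS (V - {u}) (E - {{u,w}}) x f" using less.hyps[OF lt s' ne'] by blast
        then show ?thesis using PS_leaf[OF s uw u(2)] by blast
      next
        case noleaf: False
        obtain e0 where e0: "e0 \<in> E" using Ene by blast
        obtain p q where pq: "e0 = {p,q}" "p \<noteq> q" "p \<in> V" "q \<in> V" using sg_edge[OF s e0] by blast
        have cV: "2 \<le> card V"
        proof -
          have "{p,q} \<subseteq> V" using pq by simp
          then have "card {p,q} \<le> card V" using finV by (simp add: card_mono)
          then show ?thesis using pq(2) by simp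
        qed
        have md: "\<forall>u\<in>V. 2 \<le> degree E u" using noiso noleaf cV by force
        have pqE: "{p,q} \<in> E" using e0 pq by simp
        obtain v a b where vab: "{v,a} \<in> E" "{v,b} \<in> E" "a \<noteq> b"
            and xc: "degree E x = 0 \<or> odd (degree E x) \<or> x = b"
        proof (cases "1 \<le> degree E x \<and> even (degree E x)")
          case True
          have xV: "x \<in> V" using deg_pos_mem[OF s] True by blast
          obtain v where xv: "{x,v} \<in> E" using deg_nb_ex[OF s] True by blast
          have vV: "v \<in> V" using sg_mem[OF s xv] by simp
          obtain a where va: "{v,a} \<in> E" "a \<noteq> x" using deg2_other[OF s] md vV by blast
          have "{v,x} \<in> E" using xv by (simp add: insert_commute)
          then show ?thesis using that[OF va(1) _ va(2)] by blast
        next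
          case False
          obtain a where pa: "{p,a} \<in> E" "a \<noteq> q" using deg2_other[OF s] md pq(3) by blast
          have "degree E x = 0 \<or> odd (degree E x)" using False by auto
          then show ?thesis using that[OF pa(1) pqE pa(2)] by blast
        qed
        have aV: "a \<in> V" using sg_mem[OF s vab(1)] by simp
        have da: "2 \<le> degree E a" using md aV by simp
        have s': "simple_graph V (E - {{v,a},{v,b}})" using sg_sub[OF s] .
        have lt: "card V + card (E - {{v,a},{v,b}}) < card V + card E"
          using card_Ediff[OF fin, of "{{v,a},{v,b}}"] vab by simp
        obtain f where "PS V (E - {{v,a},{v,b}}) a f" using less.hyps[OF lt s' ne] by blast
        then show ?thesis using PS_p3[OF s vab da _ xc] by blast
      qed
    qed
  qed
qed

definition PP :: "'a set \<Rightarrow> 'a set set \<Rightarrow> 'a \<Rightarrow> 'a \<Rightarrow> ('a set \<Rightarrow> int) \<Rightarrow> bool" where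
  "PP V E x y f \<longleftrightarrow> PS V E x f \<and> (fv E f y = 0 \<longrightarrow> (\<forall>z. {y,z} \<in> E \<longrightarrow> f {y,z} = 1 \<longrightarrow> 2 \<le> fv E f z))"

lemma PP_empty: "simple_graph V {} \<Longrightarrow> V \<noteq> {} \<Longrightarrow> PP V {} x y (\<lambda>_. 1)"
proof -
  assume a: "simple_graph V {}" "V \<noteq> {}"
  have "PS V {} x (\<lambda>_. 1)" using PS_empty[OF a] .
  then show ?thesis unfolding PP_def by simp
qed

lemma PP_iso:
  assumes s: "simple_graph V E" and u: "u \<in> V" and d: "degree E u = 0"
    and IH: "PP (V - {u}) E x y f"
  shows "PP V E x y f"
  using IH PS_iso[OF s u d] unfolding PP_def by blast

lemma PP_leaf:
  assumes s: "simple_graph V E" and uw: "{u,w} \<in> E" and d: "degree E u = 1"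
    and IH: "PP (V - {u}) (E - {{u,w}}) x y f"
  shows "PP V E x y (lab {{u,w}} (\<lambda>_. 1) f)"
proof -
  have fin: "finite E" using sg_finE[OF s] .
  have uw': "u \<noteq> w" "u \<in> V" "w \<in> V" using sg_mem[OF s uw] by auto
  have ue: "\<forall>e\<in>E. u \<in> e \<longrightarrow> e \<in> {{u,w}}" using leaf_edges[OF s uw d] .
  have sub: "{{u,w}} \<subseteq> E" using uw by simp
  let ?f = "lab {{u,w}} (\<lambda>_. 1) f" and ?E = "E - {{u,w}}"
  have fvf: "\<And>z. fv E ?f z = fv ?E f z + (if z \<in> {u,w} then 1 else 0)"
    using fv_lab[OF fin sub] by simp
  have fu0: "fv ?E f u = 0" using ue by (intro fv_noedge) blast
  have IH': "PS (V - {u}) ?E x f" "fv ?E f y = 0 \<longrightarrow> (\<forall>z. {y,z} \<in> ?E \<longrightarrow> f {y,z} = 1 \<longrightarrow> 2 \<le> fv ?E f z)"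
    using IH unfolding PP_def by auto
  have a': "\<forall>z\<in>V - {u}. 0 \<le> fv ?E f z" using IH'(1) unfolding PS_def by auto
  have soft: "fv E ?f y = 0 \<longrightarrow> (\<forall>z. {y,z} \<in> E \<longrightarrow> ?f {y,z} = 1 \<longrightarrow> 2 \<le> fv E ?f z)"
  proof (intro impI allI)
    fix z assume y0: "fv E ?f y = 0" and yz: "{y,z} \<in> E" and fz: "?f {y,z} = 1"
    have yn: "y \<notin> {u,w}"
    proof
      assume "y \<in> {u,w}"
      moreover have "0 \<le> fv ?E f y"
      proof (cases "y = u")
        case True then show ?thesis using fu0 by simp
      next
        case False then have "y = w" using \<open>y \<in> {u,w}\<close> by simp
        then show ?thesis using a' uw' by auto
      qed
      ultimately show False using y0 fvf[of y] by simp
    qed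
    have y0': "fv ?E f y = 0" using y0 fvf[of y] yn by simp
    have "{y,z} \<noteq> {u,w}" using yn by (auto simp: doubleton_eq_iff)
    then have yz': "{y,z} \<in> ?E" "f {y,z} = 1" using yz fz unfolding lab_def by auto
    then have "2 \<le> fv ?E f z" using IH'(2) y0' by blast
    then show "2 \<le> fv E ?f z" using fvf[of z] by simp
  qed
  show ?thesis unfolding PP_def using PS_leaf[OF s uw d IH'(1)] soft by blast
qed

lemma PP_vac1:
  assumes s: "simple_graph V E" and P: "PS V E x f" and c: "odd (degree E y) \<or> degree E y = 0 \<or> x = y"
  shows "PP V E x y f"
proof -
  have fin: "finite E" using sg_finE[OF s] .
  have P': "pm_one E f" "\<forall>w\<in>V. 0 \<le> fv E f w" "1 \<le> degree E x \<longrightarrow> 1 \<le> fv E f x" using P unfolding PS_def by auto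
  have "fv E f y = 0 \<longrightarrow> (\<forall>z. {y,z} \<in> E \<longrightarrow> f {y,z} = 1 \<longrightarrow> 2 \<le> fv E f z)"
  proof (cases "degree E y = 0")
    case True then show ?thesis using deg0_noedge[OF s True] by blast
  next
    case False
    then have d1: "1 \<le> degree E y" by simp
    have "1 \<le> fv E f y"
    proof (cases "x = y")
      case True then show ?thesis using P'(3) d1 by simp
    next
      case False
      then have "odd (degree E y)" using c \<open>degree E y \<noteq> 0\<close> by simp
      moreover have "0 \<le> fv E f y" using P'(2) deg_pos_mem[OF s d1] by simp
      ultimately show ?thesis using odd_ge1[OF fin P'(1)] by simp
    qed
    then show ?thesis by simp
  qed
  then show ?thesis unfolding PP_def using P by blast
qed

lemma PP_vac2:
  assumes s: "simple_graph V E" and P: "PS V E y f" and c: "odd (degree E x) \<or> degree E x = 0"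
  shows "PP V E x y f"
proof -
  have fin: "finite E" using sg_finE[OF s] .
  have P': "pm_one E f" "\<forall>w\<in>V. 0 \<le> fv E f w" "1 \<le> degree E y \<longrightarrow> 1 \<le> fv E f y"
    "fG E f \<le> int (card V) - 1" using P unfolding PS_def by auto
  have dx: "1 \<le> degree E x \<longrightarrow> 1 \<le> fv E f x"
  proof
    assume d1: "1 \<le> degree E x"
    then have "odd (degree E x)" using c by auto
    moreover have "0 \<le> fv E f x" using P'(2) deg_pos_mem[OF s d1] by simp
    ultimately show "1 \<le> fv E f x" using odd_ge1[OF fin P'(1)] by simp
  qed
  have sy: "fv E f y = 0 \<longrightarrow> (\<forall>z. {y,z} \<in> E \<longrightarrow> f {y,z} = 1 \<longrightarrow> 2 \<le> fv E f z)"
  proof (cases "degree E y = 0")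
    case True then show ?thesis using deg0_noedge[OF s True] by blast
  next
    case False then show ?thesis using P'(3) by simp
  qed
  show ?thesis unfolding PP_def PS_def using P' dx sy by blast
qed

lemma PP_p3:
  assumes s: "simple_graph V E" and cp: "{c,p} \<in> E" and cm: "{c,m} \<in> E" and pm: "p \<noteq> m"
    and dm: "2 \<le> degree E m" and ev: "even (degree E p)"
    and yc: "y = c \<or> (y \<noteq> c \<and> y \<noteq> p \<and> y \<noteq> m \<and> {y,m} \<notin> E)"
    and IH: "PP V (E - {{c,p},{c,m}}) m y f"
  shows "PP V E p y (lab {{c,p},{c,m}} (\<lambda>e. if e = {c,p} then 1 else -1) f)"
proof -
  have fin: "finite E" using sg_finE[OF s] .
  have cp': "c \<noteq> p" "c \<in> V" "p \<in> V" using sg_mem[OF s cp] by auto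
  have cm': "c \<noteq> m" "m \<in> V" using sg_mem[OF s cm] by auto
  have ne: "{c,p} \<noteq> {c,m}" using pm cp' cm' by (auto simp: doubleton_eq_iff)
  let ?F = "{{c,p},{c,m}}" and ?g = "\<lambda>e. if e = {c,p} then 1 else (-1::int)"
  let ?f = "lab ?F ?g f" and ?E = "E - {{c,p},{c,m}}"
  have sub: "?F \<subseteq> E" using cp cm by simp
  have gcm: "?g {c,m} = -1" using ne by simp
  have fvf: "\<And>z. fv E ?f z = fv ?E f z + ((if z \<in> {c,p} then 1 else 0) + (if z \<in> {c,m} then -1 else 0))"
    using fv_lab[OF fin sub, of ?g f] dl2[OF ne, of ?g] gcm by simp
  have dg: "\<And>z. int (degree E z) = int (degree ?E z) + ((if z \<in> {c,p} then 1 else 0) + (if z \<in> {c,m} then 1 else 0))"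
    using deg_lab[OF fin sub] dl2[OF ne, of "\<lambda>_. 1"] by simp
  have IH': "pm_one ?E f" "\<forall>z\<in>V. 0 \<le> fv ?E f z"
     "1 \<le> degree ?E m \<longrightarrow> 1 \<le> fv ?E f m" "fG ?E f \<le> int (card V) - 1"
     "fv ?E f y = 0 \<longrightarrow> (\<forall>z. {y,z} \<in> ?E \<longrightarrow> f {y,z} = 1 \<longrightarrow> 2 \<le> fv ?E f z)"
    using IH unfolding PP_def PS_def by auto
  have pmf: "pm_one E ?f" using pm_lab[OF IH'(1)] by simp
  have m1: "1 \<le> fv ?E f m"
  proof -
    have "int (degree E m) = int (degree ?E m) + 1" using dg[of m] pm cm' by simp
    then show ?thesis using IH'(3) dm by simp
  qed
  have fvm: "fv E ?f m = fv ?E f m - 1" using fvf[of m] pm cm' by simp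
  have fvp: "fv E ?f p = fv ?E f p + 1" using fvf[of p] pm cp' by simp
  have fvc: "fv E ?f c = fv ?E f c" using fvf[of c] by simp
  have fvo: "\<And>z. z \<noteq> m \<Longrightarrow> fv ?E f z \<le> fv E ?f z" using fvf by simp
  have fvo2: "\<And>z. z \<notin> {c,p,m} \<Longrightarrow> fv E ?f z = fv ?E f z" using fvf by simp
  have a: "\<forall>z\<in>V. 0 \<le> fv E ?f z"
  proof
    fix z assume z: "z \<in> V"
    have "0 \<le> fv ?E f z" using IH'(2) z by simp
    then show "0 \<le> fv E ?f z" using fvo[of z] fvm m1 by (cases "z = m") auto
  qed
  have p2: "2 \<le> fv E ?f p"
  proof -
    have "int (degree E p) = int (degree ?E p) + 1" using dg[of p] pm cp' by simp
    then have "degree E p = Suc (degree ?E p)" by linarith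
    then have "odd (degree ?E p)" using ev by simp
    moreover have "0 \<le> fv ?E f p" using IH'(2) cp' by simp
    ultimately have "1 \<le> fv ?E f p" using odd_ge1[OF _ IH'(1)] fin by simp
    then show ?thesis using fvp by simp
  qed
  have soft: "fv E ?f y = 0 \<longrightarrow> (\<forall>z. {y,z} \<in> E \<longrightarrow> ?f {y,z} = 1 \<longrightarrow> 2 \<le> fv E ?f z)"
  proof (intro impI allI)
    fix z assume y0: "fv E ?f y = 0" and yz: "{y,z} \<in> E" and fz: "?f {y,z} = 1"
    show "2 \<le> fv E ?f z"
    proof (cases "{y,z} \<in> ?F")
      case True
      then have "?g {y,z} = 1" using fz by (simp add: lab_def)
      then have "{y,z} = {c,p}" by (cases "{y,z} = {c,p}") simp_all
      then have "z = p \<or> (y = p \<and> z = c)" by (auto simp: doubleton_eq_iff)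
      moreover have "y \<noteq> p" using yc cp' by auto
      ultimately show ?thesis using p2 by auto
    next
      case False
      have yz': "{y,z} \<in> ?E" "f {y,z} = 1" using False yz fz by (simp_all add: lab_def)
      have y0': "fv ?E f y = 0" using y0 fvf[of y] yc by auto
      have zm: "z \<noteq> m"
      proof
        assume "z = m"
        then show False using yc False yz by auto
      qed
      have "2 \<le> fv ?E f z" using IH'(5) y0' yz' by blast
      then show ?thesis using fvo[OF zm] by simp
    qed
  qed
  have c: "fG E ?f \<le> int (card V) - 1"
    using fG_lab[OF fin sub, of ?g f] IH'(4) sum2[OF ne, of ?g] gcm by simp
  show ?thesis unfolding PP_def PS_def using pmf a p2 soft c by auto
qed

lemma PP_C4:
  assumes s: "simple_graph V E" and e1: "{v,a} \<in> E" and e2: "{a,w} \<in> E" and e3: "{w,b} \<in> E"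
    and e4: "{b,v} \<in> E" and vw: "v \<noteq> w" and ab: "a \<noteq> b"
    and xn: "x \<notin> {v,a,w,b}" and yn: "y \<notin> {v,a,w,b}"
    and IH: "PP V (E - {{v,a},{a,w},{w,b},{b,v}}) x y f"
  shows "PP V E x y (lab {{v,a},{a,w},{w,b},{b,v}} (\<lambda>e. if e = {v,a} \<or> e = {w,b} then 1 else -1) f)"
proof -
  have fin: "finite E" using sg_finE[OF s] .
  have d1: "v \<noteq> a" using sg_mem[OF s e1] by simp
  have d2: "a \<noteq> w" using sg_mem[OF s e2] by simp
  have d3: "w \<noteq> b" using sg_mem[OF s e3] by simp
  have d4: "b \<noteq> v" using sg_mem[OF s e4] by simp
  let ?F = "{{v,a},{a,w},{w,b},{b,v}}" and ?g = "\<lambda>e. if e = {v,a} \<or> e = {w,b} then 1 else (-1::int)"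
  let ?f = "lab ?F ?g f" and ?E = "E - {{v,a},{a,w},{w,b},{b,v}}"
  have n12: "{v,a} \<noteq> {a,w}" using vw ab d1 d2 d3 d4 by (auto simp: doubleton_eq_iff)
  have n13: "{v,a} \<noteq> {w,b}" using vw ab d1 d2 d3 d4 by (auto simp: doubleton_eq_iff)
  have n14: "{v,a} \<noteq> {b,v}" using vw ab d1 d2 d3 d4 by (auto simp: doubleton_eq_iff)
  have n23: "{a,w} \<noteq> {w,b}" using vw ab d1 d2 d3 d4 by (auto simp: doubleton_eq_iff)
  have n24: "{a,w} \<noteq> {b,v}" using vw ab d1 d2 d3 d4 by (auto simp: doubleton_eq_iff)
  have n34: "{w,b} \<noteq> {b,v}" using vw ab d1 d2 d3 d4 by (auto simp: doubleton_eq_iff)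
  have g2: "?g {a,w} = -1" using n12 n23[symmetric] by auto
  have g4: "?g {b,v} = -1" using n14[symmetric] n34[symmetric] by auto
  have sub: "?F \<subseteq> E" using e1 e2 e3 e4 by simp
  have dlF: "\<And>h z. dl ?F h z = (if z \<in> {v,a} then h {v,a} else 0) + (if z \<in> {a,w} then h {a,w} else 0)
      + (if z \<in> {w,b} then h {w,b} else 0) + (if z \<in> {b,v} then h {b,v} else 0)"
    using n12 n13 n14 n23 n24 n34 by simp
  have dl0: "\<And>z. dl ?F ?g z = 0"
  proof -
    fix z
    show "dl ?F ?g z = 0"
      unfolding dlF using g2 g4 d1 d2 d3 d4 vw ab by (cases "z = v"; cases "z = a"; cases "z = w"; cases "z = b") auto
  qed
  have fvf: "\<And>z. fv E ?f z = fv ?E f z" using fv_lab[OF fin sub, of ?g f] dl0 by simp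
  have dgx: "degree E x = degree ?E x"
    using deg_lab[OF fin sub, of x] dlF[of "\<lambda>_. 1" x] xn by simp
  have sumg: "sum ?g ?F = 0"
    using n12 n13 n14 n23 n24 n34 g2 g4 by simp
  have IH': "pm_one ?E f" "\<forall>z\<in>V. 0 \<le> fv ?E f z"
     "1 \<le> degree ?E x \<longrightarrow> 1 \<le> fv ?E f x" "fG ?E f \<le> int (card V) - 1"
     "fv ?E f y = 0 \<longrightarrow> (\<forall>z. {y,z} \<in> ?E \<longrightarrow> f {y,z} = 1 \<longrightarrow> 2 \<le> fv ?E f z)"
    using IH unfolding PP_def PS_def by auto
  have pmf: "pm_one E ?f" using pm_lab[OF IH'(1)] by simp
  have soft: "fv E ?f y = 0 \<longrightarrow> (\<forall>z. {y,z} \<in> E \<longrightarrow> ?f {y,z} = 1 \<longrightarrow> 2 \<le> fv E ?f z)"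
  proof (intro impI allI)
    fix z assume y0: "fv E ?f y = 0" and yz: "{y,z} \<in> E" and fz: "?f {y,z} = 1"
    have "{y,z} \<notin> ?F" using yn by (auto simp: doubleton_eq_iff)
    then have yz': "{y,z} \<in> ?E" "f {y,z} = 1" using yz fz by (simp_all add: lab_def)
    have "2 \<le> fv ?E f z" using IH'(5) y0 fvf yz' by simp
    then show "2 \<le> fv E ?f z" using fvf by simp
  qed
  have c: "fG E ?f \<le> int (card V) - 1"
    using fG_lab[OF fin sub, of ?g f] IH'(4) sumg by simp
  show ?thesis unfolding PP_def PS_def using pmf IH'(2) IH'(3) fvf dgx soft c by auto
qed

lemma PP_RV2:
  assumes s: "simple_graph V E" and vx: "{v,x} \<in> E" and vy: "{v,y} \<in> E" and dv: "degree E v = 2"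
    and yz: "{y,z} \<in> E" and zv: "z \<noteq> v" and zx: "z \<noteq> x" and xy: "x \<noteq> y"
    and evx: "even (degree E x)" and dz: "2 \<le> degree E z"
    and IH: "PP (V - {v}) (E - {{v,x},{v,y},{y,z}}) z y f"
  shows "PP V E x y (lab {{v,x},{v,y},{y,z}} (\<lambda>e. if e = {y,z} then -1 else 1) f)"
proof -
  have fin: "finite E" using sg_finE[OF s] .
  have finV: "finite V" using sg_finV[OF s] .
  have vx': "v \<noteq> x" "v \<in> V" "x \<in> V" using sg_mem[OF s vx] by auto
  have vy': "v \<noteq> y" "y \<in> V" using sg_mem[OF s vy] by auto
  have yz': "y \<noteq> z" "z \<in> V" using sg_mem[OF s yz] by auto
  let ?F = "{{v,x},{v,y},{y,z}}" and ?g = "\<lambda>e. if e = {y,z} then -1 else (1::int)"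
  let ?f = "lab ?F ?g f" and ?E = "E - {{v,x},{v,y},{y,z}}"
  have n12: "{v,x} \<noteq> {v,y}" using xy by (auto simp: doubleton_eq_iff)
  have n13: "{v,x} \<noteq> {y,z}" using vy' zv by (auto simp: doubleton_eq_iff)
  have n23: "{v,y} \<noteq> {y,z}" using vy' zv by (auto simp: doubleton_eq_iff)
  have g1: "?g {v,x} = 1" using n13 by (simp only: if_False)
  have g2: "?g {v,y} = 1" using n23 by (simp only: if_False)
  have sub: "?F \<subseteq> E" using vx vy yz by simp
  have nbv: "nb E v = {x,y}"
  proof -
    have "{x,y} \<subseteq> nb E v" using vx vy unfolding nb_def by simp
    moreover have "card (nb E v) = 2" using dv deg_nb[OF s] by simp
    moreover have "card {x,y} = 2" using xy by simp
    ultimately show ?thesis using nb_fin[OF s] by (metis card_subset_eq)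
  qed
  have ve: "\<forall>e\<in>E. v \<in> e \<longrightarrow> e \<in> ?F"
  proof (intro ballI impI)
    fix e assume "e \<in> E" "v \<in> e"
    then have "e \<in> inc_edges E v" by (simp add: inc_edges_def)
    then obtain u where "u \<in> nb E v" "e = {v,u}" using inc_nb[OF s] by blast
    then show "e \<in> ?F" using nbv by auto
  qed
  have s': "simple_graph (V - {v}) ?E" using sg_del[OF s ve] .
  have dlF: "\<And>h t. dl ?F h t = (if t \<in> {v,x} then h {v,x} else 0) + (if t \<in> {v,y} then h {v,y} else 0)
      + (if t \<in> {y,z} then h {y,z} else 0)"
    using n12 n13 n23 by simp
  have g3: "?g {y,z} = -1" by simp
  have fvf: "\<And>t. fv E ?f t = fv ?E f t + ((if t \<in> {v,x} then 1 else 0) + (if t \<in> {v,y} then 1 else 0)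
      + (if t \<in> {y,z} then -1 else 0))"
  proof -
    fix t
    have "fv E ?f t = fv ?E f t + dl ?F ?g t" by (rule fv_lab[OF fin sub])
    also have "dl ?F ?g t = (if t \<in> {v,x} then ?g {v,x} else 0) + (if t \<in> {v,y} then ?g {v,y} else 0)
      + (if t \<in> {y,z} then ?g {y,z} else 0)" by (rule dlF)
    also have "\<dots> = (if t \<in> {v,x} then 1 else 0) + (if t \<in> {v,y} then 1 else 0)
      + (if t \<in> {y,z} then -1 else 0)" by (simp only: g1 g2 g3)
    finally show "fv E ?f t = fv ?E f t + ((if t \<in> {v,x} then 1 else 0) + (if t \<in> {v,y} then 1 else 0)
      + (if t \<in> {y,z} then -1 else 0))" by simp
  qed
  have dgf: "\<And>t. int (degree E t) = int (degree ?E t) + ((if t \<in> {v,x} then 1 else 0) + (if t \<in> {v,y} then 1 else 0)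
      + (if t \<in> {y,z} then 1 else 0))"
    using deg_lab[OF fin sub] dlF[of "\<lambda>_. 1"] by simp
  have fv0: "fv ?E f v = 0" using ve by (intro fv_noedge) blast
  have IH': "pm_one ?E f" "\<forall>t\<in>V - {v}. 0 \<le> fv ?E f t"
     "1 \<le> degree ?E z \<longrightarrow> 1 \<le> fv ?E f z" "fG ?E f \<le> int (card (V - {v})) - 1"
     "fv ?E f y = 0 \<longrightarrow> (\<forall>t. {y,t} \<in> ?E \<longrightarrow> f {y,t} = 1 \<longrightarrow> 2 \<le> fv ?E f t)"
    using IH unfolding PP_def PS_def by auto
  have pmf: "pm_one E ?f" using pm_lab[OF IH'(1)] by simp
  have fvv: "fv E ?f v = 2" using fvf[of v] fv0 vy' zv by simp
  have fvx: "fv E ?f x = fv ?E f x + 1" using fvf[of x] vx' xy zx by auto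
  have fvy: "fv E ?f y = fv ?E f y" using fvf[of y] vy' xy by auto
  have fvz: "fv E ?f z = fv ?E f z - 1" using fvf[of z] zv zx yz' by auto
  have fvo: "\<And>t. t \<notin> {v,x,y,z} \<Longrightarrow> fv E ?f t = fv ?E f t" using fvf by simp
  have z1: "1 \<le> fv ?E f z"
  proof -
    have "int (degree E z) = int (degree ?E z) + 1" using dgf[of z] zv zx yz' by auto
    then show ?thesis using IH'(3) dz by simp
  qed
  have x2: "2 \<le> fv E ?f x"
  proof -
    have "int (degree E x) = int (degree ?E x) + 1" using dgf[of x] vx' xy zx by auto
    then have "degree E x = Suc (degree ?E x)" by linarith
    then have "odd (degree ?E x)" using evx by simp
    moreover have "0 \<le> fv ?E f x" using IH'(2) vx' by simp
    ultimately have "1 \<le> fv ?E f x" using odd_ge1[OF _ IH'(1)] fin by simp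
    then show ?thesis using fvx by simp
  qed
  have a: "\<forall>t\<in>V. 0 \<le> fv E ?f t"
  proof
    fix t assume t: "t \<in> V"
    show "0 \<le> fv E ?f t"
    proof (cases "t \<in> {v,x,y,z}")
      case True then show ?thesis using fvv x2 fvy fvz z1 IH'(2) vy' yz' by auto
    next
      case False then show ?thesis using fvo IH'(2) t by auto
    qed
  qed
  have soft: "fv E ?f y = 0 \<longrightarrow> (\<forall>t. {y,t} \<in> E \<longrightarrow> ?f {y,t} = 1 \<longrightarrow> 2 \<le> fv E ?f t)"
  proof (intro impI allI)
    fix t assume y0: "fv E ?f y = 0" and yt: "{y,t} \<in> E" and ft: "?f {y,t} = 1"
    show "2 \<le> fv E ?f t"
    proof (cases "{y,t} \<in> ?F")
      case True
      then have "?g {y,t} = 1" using ft by (simp add: lab_def)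
      then have "{y,t} \<noteq> {y,z}" by auto
      then have "{y,t} = {v,x} \<or> {y,t} = {v,y}" using True by auto
      then have "t = v" using vy' xy by (auto simp: doubleton_eq_iff)
      then show ?thesis using fvv by simp
    next
      case False
      have yt': "{y,t} \<in> ?E" "f {y,t} = 1" using False yt ft by (simp_all add: lab_def)
      have "t \<noteq> z" using False by auto
      moreover have "t \<noteq> v" using False by (auto simp: insert_commute)
      moreover have "2 \<le> fv ?E f t" using IH'(5) y0 fvy yt' by simp
      ultimately show ?thesis using fvf[of t] by auto
    qed
  qed
  have cd: "int (card (V - {v})) = int (card V) - 1" using card_del[OF finV vx'(2)] .
  have sumg: "sum ?g ?F = 1" using n12 n13 n23 g1 g2 by simp
  have c: "fG E ?f \<le> int (card V) - 1"
    using fG_lab[OF fin sub, of ?g f] IH'(4) sumg cd by simp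
  show ?thesis unfolding PP_def PS_def using pmf a x2 soft c by auto
qed

definition gP :: "'a \<Rightarrow> 'a \<Rightarrow> ('a \<Rightarrow> int) \<Rightarrow> 'a set \<Rightarrow> int" where
  "gP v y \<tau> = (\<lambda>e. if v \<in> e then \<tau> (the_elem (e - {v})) else - \<tau> (the_elem (e - {y})))"

definition FP :: "'a set set \<Rightarrow> 'a \<Rightarrow> 'a \<Rightarrow> 'a set \<Rightarrow> 'a set set" where
  "FP E v y P = inc_edges E v \<union> (\<lambda>a. {y,a}) ` P"

lemma gP_v: "u \<noteq> v \<Longrightarrow> gP v y \<tau> {v,u} = \<tau> u"
proof -
  assume "u \<noteq> v"
  then have "{v,u} - {v} = {u}" by auto
  then show ?thesis unfolding gP_def by simp
qed

lemma gP_y: "a \<noteq> y \<Longrightarrow> v \<noteq> a \<Longrightarrow> v \<noteq> y \<Longrightarrow> gP v y \<tau> {y,a} = - \<tau> a"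
proof -
  assume "a \<noteq> y" "v \<noteq> a" "v \<noteq> y"
  then have "v \<notin> {y,a}" "{y,a} - {y} = {a}" by auto
  then show ?thesis unfolding gP_def by simp
qed

lemma dl_inc:
  assumes s: "simple_graph V E"
  shows "dl (inc_edges E v) h w = (if w = v then (\<Sum>u\<in>nb E v. h {v,u}) else if w \<in> nb E v then h {v,w} else 0)"
proof -
  have fn: "finite (nb E v)" using nb_fin[OF s] .
  have "dl (inc_edges E v) h w = (\<Sum>e\<in>(\<lambda>u. {v,u}) ` nb E v. if w \<in> e then h e else 0)"
    unfolding dl_def inc_nb[OF s] ..
  also have "\<dots> = (\<Sum>u\<in>nb E v. if w \<in> {v,u} then h {v,u} else 0)"
    by (subst sum.reindex[OF inj_dbl]) simp
  also have "\<dots> = (if w = v then (\<Sum>u\<in>nb E v. h {v,u}) else if w \<in> nb E v then h {v,w} else 0)"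
  proof (cases "w = v")
    case True then show ?thesis by simp
  next
    case False
    then have "(\<Sum>u\<in>nb E v. if w \<in> {v,u} then h {v,u} else 0) = (\<Sum>u\<in>nb E v. if u = w then h {v,u} else 0)"
      by (intro sum.cong) auto
    also have "\<dots> = (if w \<in> nb E v then h {v,w} else 0)" using fn by (simp add: sum.delta')
    finally show ?thesis using False by simp
  qed
  finally show ?thesis .
qed

lemma dl_img:
  assumes fP: "finite P" and yP: "y \<notin> P"
  shows "dl ((\<lambda>a. {y,a}) ` P) h w = (if w = y then (\<Sum>a\<in>P. h {y,a}) else if w \<in> P then h {y,w} else 0)"
proof -
  have "dl ((\<lambda>a. {y,a}) ` P) h w = (\<Sum>a\<in>P. if w \<in> {y,a} then h {y,a} else 0)"
    unfolding dl_def by (subst sum.reindex[OF inj_dbl]) simp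
  also have "\<dots> = (if w = y then (\<Sum>a\<in>P. h {y,a}) else if w \<in> P then h {y,w} else 0)"
  proof (cases "w = y")
    case True then show ?thesis by simp
  next
    case False
    then have "(\<Sum>a\<in>P. if w \<in> {y,a} then h {y,a} else 0) = (\<Sum>a\<in>P. if a = w then h {y,a} else 0)"
      by (intro sum.cong) auto
    also have "\<dots> = (if w \<in> P then h {y,w} else 0)" using fP by (simp add: sum.delta')
    finally show ?thesis using False by simp
  qed
  finally show ?thesis .
qed

lemma FP_facts:
  assumes s: "simple_graph V E" and vy: "v \<noteq> y" and P: "P \<subseteq> nb E v \<inter> nb E y"
  shows "FP E v y P \<subseteq> E" "finite P" "y \<notin> P" "v \<notin> P"
    "inc_edges E v \<inter> (\<lambda>a. {y,a}) ` P = {}"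
    "\<forall>e\<in>E. v \<in> e \<longrightarrow> e \<in> FP E v y P"
    "\<And>h w. dl (FP E v y P) h w = (if w = v then (\<Sum>u\<in>nb E v. h {v,u}) else if w \<in> nb E v then h {v,w} else 0)
        + (if w = y then (\<Sum>a\<in>P. h {y,a}) else if w \<in> P then h {y,w} else 0)"
    "\<And>h. sum h (FP E v y P) = (\<Sum>u\<in>nb E v. h {v,u}) + (\<Sum>a\<in>P. h {y,a})"
proof -
  show fP: "finite P" using P nb_fin[OF s] finite_subset by blast
  show yP: "y \<notin> P" using P nb_irr[OF s] by blast
  show vP: "v \<notin> P" using P nb_irr[OF s] by blast
  show sub: "FP E v y P \<subseteq> E"
  proof -
    have "inc_edges E v \<subseteq> E" by (auto simp: inc_edges_def)
    moreover have "(\<lambda>a. {y,a}) ` P \<subseteq> E" using P unfolding nb_def by auto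
    ultimately show ?thesis unfolding FP_def by simp
  qed
  show dis: "inc_edges E v \<inter> (\<lambda>a. {y,a}) ` P = {}" using vy vP by (auto simp: inc_edges_def)
  show "\<forall>e\<in>E. v \<in> e \<longrightarrow> e \<in> FP E v y P" unfolding FP_def inc_edges_def by auto
  have fi: "finite (inc_edges E v)" using sg_finE[OF s] by (simp add: inc_edges_def)
  have fI: "finite ((\<lambda>a. {y,a}) ` P)" using fP by simp
  show "\<And>h w. dl (FP E v y P) h w = (if w = v then (\<Sum>u\<in>nb E v. h {v,u}) else if w \<in> nb E v then h {v,w} else 0)
        + (if w = y then (\<Sum>a\<in>P. h {y,a}) else if w \<in> P then h {y,w} else 0)"
    unfolding FP_def using dl_union[OF fi fI dis] dl_inc[OF s] dl_img[OF fP yP] by simp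
  show "\<And>h. sum h (FP E v y P) = (\<Sum>u\<in>nb E v. h {v,u}) + (\<Sum>a\<in>P. h {y,a})"
  proof -
    fix h
    have "sum h (FP E v y P) = sum h (inc_edges E v) + sum h ((\<lambda>a. {y,a}) ` P)"
      unfolding FP_def by (rule sum.union_disjoint[OF fi fI dis])
    also have "sum h (inc_edges E v) = (\<Sum>u\<in>nb E v. h {v,u})"
      unfolding inc_nb[OF s] by (subst sum.reindex[OF inj_dbl]) simp
    also have "sum h ((\<lambda>a. {y,a}) ` P) = (\<Sum>a\<in>P. h {y,a})"
      by (subst sum.reindex[OF inj_dbl]) simp
    finally show "sum h (FP E v y P) = (\<Sum>u\<in>nb E v. h {v,u}) + (\<Sum>a\<in>P. h {y,a})" .
  qed
qed

lemma FP_lift: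
  assumes s: "simple_graph V E" and vy: "v \<noteq> y" and P: "P \<subseteq> nb E v \<inter> nb E y"
  shows "fv E (lab (FP E v y P) (gP v y \<tau>) f) w = fv (E - FP E v y P) f w +
      ((if w = v then (\<Sum>u\<in>nb E v. \<tau> u) else if w \<in> nb E v then \<tau> w else 0)
     + (if w = y then - (\<Sum>a\<in>P. \<tau> a) else if w \<in> P then - \<tau> w else 0))"
    and "fG E (lab (FP E v y P) (gP v y \<tau>) f) = fG (E - FP E v y P) f + (\<Sum>u\<in>nb E v. \<tau> u) - (\<Sum>a\<in>P. \<tau> a)"
    and "int (degree E w) = int (degree (E - FP E v y P) w) +
      ((if w = v then int (card (nb E v)) else if w \<in> nb E v then 1 else 0)
     + (if w = y then int (card P) else if w \<in> P then 1 else 0))"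
    and "fv (E - FP E v y P) f v = 0"
    and "simple_graph (V - {v}) (E - FP E v y P)"
proof -
  note FF = FP_facts[OF s vy P]
  have fin: "finite E" using sg_finE[OF s] .
  have gv: "\<And>u. u \<in> nb E v \<Longrightarrow> gP v y \<tau> {v,u} = \<tau> u"
  proof -
    fix u assume "u \<in> nb E v"
    then have "u \<noteq> v" using nb_irr[OF s] by blast
    then show "gP v y \<tau> {v,u} = \<tau> u" by (rule gP_v)
  qed
  have gy: "\<And>a. a \<in> P \<Longrightarrow> gP v y \<tau> {y,a} = - \<tau> a"
  proof -
    fix a assume a: "a \<in> P"
    then have ay: "a \<noteq> y" and va: "v \<noteq> a" using FF(3) FF(4) by auto
    show "gP v y \<tau> {y,a} = - \<tau> a" using gP_y[OF ay va vy] .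
  qed
  have s1: "(\<Sum>u\<in>nb E v. gP v y \<tau> {v,u}) = (\<Sum>u\<in>nb E v. \<tau> u)" by (rule sum.cong) (auto simp: gv)
  have s2: "(\<Sum>a\<in>P. gP v y \<tau> {y,a}) = - (\<Sum>a\<in>P. \<tau> a)"
  proof -
    have "(\<Sum>a\<in>P. gP v y \<tau> {y,a}) = (\<Sum>a\<in>P. - \<tau> a)" by (rule sum.cong) (auto simp: gy)
    then show ?thesis by (simp add: sum_negf)
  qed
  have d1: "(if w = v then (\<Sum>u\<in>nb E v. gP v y \<tau> {v,u}) else if w \<in> nb E v then gP v y \<tau> {v,w} else 0)
      = (if w = v then (\<Sum>u\<in>nb E v. \<tau> u) else if w \<in> nb E v then \<tau> w else 0)"
    using s1 gv by simp
  have d2: "(if w = y then (\<Sum>a\<in>P. gP v y \<tau> {y,a}) else if w \<in> P then gP v y \<tau> {y,w} else 0)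
      = (if w = y then - (\<Sum>a\<in>P. \<tau> a) else if w \<in> P then - \<tau> w else 0)"
    using s2 gy by simp
  show "fv E (lab (FP E v y P) (gP v y \<tau>) f) w = fv (E - FP E v y P) f w +
      ((if w = v then (\<Sum>u\<in>nb E v. \<tau> u) else if w \<in> nb E v then \<tau> w else 0)
     + (if w = y then - (\<Sum>a\<in>P. \<tau> a) else if w \<in> P then - \<tau> w else 0))"
    using fv_lab[OF fin FF(1), of "gP v y \<tau>" f w] FF(7)[of "gP v y \<tau>" w] d1 d2 by simp
  show "fG E (lab (FP E v y P) (gP v y \<tau>) f) = fG (E - FP E v y P) f + (\<Sum>u\<in>nb E v. \<tau> u) - (\<Sum>a\<in>P. \<tau> a)"
    using fG_lab[OF fin FF(1), of "gP v y \<tau>" f] FF(8)[of "gP v y \<tau>"] s1 s2 by simp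
  show "int (degree E w) = int (degree (E - FP E v y P) w) +
      ((if w = v then int (card (nb E v)) else if w \<in> nb E v then 1 else 0)
     + (if w = y then int (card P) else if w \<in> P then 1 else 0))"
    using deg_lab[OF fin FF(1), of w] FF(7)[of "\<lambda>_. 1" w] by simp
  show "fv (E - FP E v y P) f v = 0" using FF(6) by (intro fv_noedge) blast
  show "simple_graph (V - {v}) (E - FP E v y P)" using sg_del[OF s FF(6)] .
qed

lemma FP_card_lt:
  assumes s: "simple_graph V E" and vy: "v \<noteq> y" and P: "P \<subseteq> nb E v \<inter> nb E y" and vV: "v \<in> V"
  shows "card (V - {v}) + card (E - FP E v y P) < card V + card E"
proof -
  have "card (V - {v}) < card V" using card_Diff1_less[OF sg_finV[OF s] vV] .
  moreover have "card (E - FP E v y P) \<le> card E" using sg_finE[OF s] by (simp add: card_mono)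
  ultimately show ?thesis by simp
qed

lemma pm_sum_split:
  assumes fP: "finite P" and B: "B \<subseteq> P"
  shows "(\<Sum>a\<in>P. (if a \<in> B then 1 else -1::int)) = 2 * int (card B) - int (card P)"
proof -
  have fB: "finite B" using fP B finite_subset by blast
  have "(\<Sum>a\<in>P. (if a \<in> B then 1 else -1::int)) = (\<Sum>a\<in>P - B. (if a \<in> B then 1 else -1::int)) + (\<Sum>a\<in>B. (if a \<in> B then 1 else -1::int))"
    by (rule sum.subset_diff[OF B fP])
  also have "(\<Sum>a\<in>B. (if a \<in> B then 1 else -1::int)) = (\<Sum>a\<in>B. 1)" by (rule sum.cong) auto
  also have "(\<Sum>a\<in>P - B. (if a \<in> B then 1 else -1::int)) = (\<Sum>a\<in>P - B. -1)" by (rule sum.cong) auto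
  also have "(\<Sum>a\<in>P - B. (-1::int)) + (\<Sum>a\<in>B. 1) = int (card B) - int (card (P - B))" by simp
  also have "card (P - B) = card P - card B" using card_Diff_subset[OF fB B] .
  also have "int (card B) - int (card P - card B) = 2 * int (card B) - int (card P)"
    using card_mono[OF fP B] by simp
  finally show ?thesis .
qed

lemma half_split:
  assumes fP: "finite P"
  obtains B where "B \<subseteq> P" "- 1 \<le> (\<Sum>a\<in>P. (if a \<in> B then 1 else -1::int))"
    "(\<Sum>a\<in>P. (if a \<in> B then 1 else -1::int)) \<le> 0"
    "odd (card P) \<Longrightarrow> (\<Sum>a\<in>P. (if a \<in> B then 1 else -1::int)) = -1"
proof -
  obtain B where B: "B \<subseteq> P" "card B = card P div 2" "finite B"
    using obtain_subset_with_card_n[of "card P div 2" P] by auto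
  have e: "(\<Sum>a\<in>P. (if a \<in> B then 1 else -1::int)) = 2 * int (card B) - int (card P)"
    using pm_sum_split[OF fP B(1)] .
  show ?thesis
  proof (cases "even (card P)")
    case True
    then have "card P = 2 * card B" using B(2) by auto
    then have "2 * int (card B) = int (card P)" by simp
    then show ?thesis using that[OF B(1)] e True by auto
  next
    case False
    then have "card P = 2 * card B + 1" using B(2) by presburger
    then have "2 * int (card B) = int (card P) - 1" by simp
    then show ?thesis using that[OF B(1)] e by auto
  qed
qed

lemma PP_RVY:
  assumes s: "simple_graph V E" and xv: "{x,v} \<in> E" and yv: "{y,v} \<in> E" and xy: "x \<noteq> y"
    and bv: "b \<in> nb E v" and bx: "b \<noteq> x" and byy: "b \<noteq> y"
    and Psub: "nb E v - {x,y,b} \<subseteq> nb E y"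
    and evx: "even (degree E x)" and db: "2 \<le> degree E b"
    and IH: "\<exists>f. PP (V - {v}) (E - FP E v y (nb E v - {x,y,b})) b b f"
  shows "\<exists>f. PP V E x y f"
proof -
  define P where "P = nb E v - {x,y,b}"
  have fin: "finite E" using sg_finE[OF s] .
  have finV: "finite V" using sg_finV[OF s] .
  have xv': "x \<noteq> v" "x \<in> V" "v \<in> V" using sg_mem[OF s xv] by auto
  have yv': "y \<noteq> v" "y \<in> V" using sg_mem[OF s yv] by auto
  have vy: "v \<noteq> y" using yv' by simp
  have xn: "x \<in> nb E v" using xv unfolding nb_def by (simp add: insert_commute)
  have yn: "y \<in> nb E v" using yv unfolding nb_def by (simp add: insert_commute)
  have bne: "b \<noteq> v" using bv nb_irr[OF s] by blast
  have Pint: "P \<subseteq> nb E v \<inter> nb E y" using Psub unfolding P_def by auto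
  have fP: "finite P" using FP_facts(2)[OF s vy Pint] .
  have xP: "x \<notin> P" "y \<notin> P" "b \<notin> P" "v \<notin> P" unfolding P_def using nb_irr[OF s] by auto
  obtain B where B: "B \<subseteq> P" "- 1 \<le> (\<Sum>a\<in>P. (if a \<in> B then 1 else -1::int))"
      "(\<Sum>a\<in>P. (if a \<in> B then 1 else -1::int)) \<le> 0" using half_split[OF fP] by blast
  define \<tau> where "\<tau> = (\<lambda>u. if u = b then -1 else if u \<in> P then (if u \<in> B then 1 else -1) else (1::int))"
  have \<tau>x: "\<tau> x = 1" "\<tau> y = 1" "\<tau> b = -1" unfolding \<tau>_def using bx byy xP by auto
  have \<tau>P: "(\<Sum>a\<in>P. \<tau> a) = (\<Sum>a\<in>P. (if a \<in> B then 1 else -1::int))"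
    by (rule sum.cong) (auto simp: \<tau>_def xP)
  have nbv: "nb E v = insert x (insert y (insert b P))" unfolding P_def using xn yn bv by auto
  have sumN: "(\<Sum>u\<in>nb E v. \<tau> u) = 1 + (\<Sum>a\<in>P. \<tau> a)"
  proof -
    have "x \<notin> insert y (insert b P)" "y \<notin> insert b P" using xy bx byy xP by auto
    then have "(\<Sum>u\<in>nb E v. \<tau> u) = \<tau> x + (\<tau> y + (\<tau> b + (\<Sum>a\<in>P. \<tau> a)))"
      unfolding nbv using fP xP by simp
    then show ?thesis using \<tau>x by simp
  qed
  obtain f where f: "PP (V - {v}) (E - FP E v y P) b b f" using IH unfolding P_def by blast
  let ?E = "E - FP E v y P" and ?f = "lab (FP E v y P) (gP v y \<tau>) f"
  have L: "\<And>w. fv E ?f w = fv ?E f w +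
      ((if w = v then (\<Sum>u\<in>nb E v. \<tau> u) else if w \<in> nb E v then \<tau> w else 0)
     + (if w = y then - (\<Sum>a\<in>P. \<tau> a) else if w \<in> P then - \<tau> w else 0))"
    using FP_lift(1)[OF s vy Pint] .
  have LG: "fG E ?f = fG ?E f + (\<Sum>u\<in>nb E v. \<tau> u) - (\<Sum>a\<in>P. \<tau> a)"
    using FP_lift(2)[OF s vy Pint] .
  have LD: "\<And>w. int (degree E w) = int (degree ?E w) +
      ((if w = v then int (card (nb E v)) else if w \<in> nb E v then 1 else 0)
     + (if w = y then int (card P) else if w \<in> P then 1 else 0))"
    using FP_lift(3)[OF s vy Pint] .
  have L0: "fv ?E f v = 0" using FP_lift(4)[OF s vy Pint] .
  have f': "pm_one ?E f" "\<forall>w\<in>V - {v}. 0 \<le> fv ?E f w" "1 \<le> degree ?E b \<longrightarrow> 1 \<le> fv ?E f b"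
      "fG ?E f \<le> int (card (V - {v})) - 1"
    using f unfolding PP_def PS_def by auto
  have pmf: "pm_one E ?f"
  proof (rule pm_lab[OF f'(1)])
    show "\<forall>e\<in>FP E v y P. gP v y \<tau> e = 1 \<or> gP v y \<tau> e = -1"
      unfolding gP_def \<tau>_def by auto
  qed
  have fvv: "fv E ?f v = 1 + (\<Sum>a\<in>P. \<tau> a)" using L[of v] L0 sumN vy xP by simp
  have fvx: "fv E ?f x = fv ?E f x + 1" using L[of x] xv' xn \<tau>x xy xP by simp
  have fvy: "fv E ?f y = fv ?E f y + 1 - (\<Sum>a\<in>P. \<tau> a)" using L[of y] yv' yn \<tau>x by simp
  have fvb: "fv E ?f b = fv ?E f b - 1" using L[of b] bne bv \<tau>x byy xP by simp
  have fvP: "\<And>a. a \<in> P \<Longrightarrow> fv E ?f a = fv ?E f a"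
  proof -
    fix a assume a: "a \<in> P"
    then have "a \<noteq> v" "a \<in> nb E v" "a \<noteq> y" using xP Pint by auto
    then show "fv E ?f a = fv ?E f a" using L[of a] a by simp
  qed
  have fvo: "\<And>w. w \<notin> insert v (nb E v) \<Longrightarrow> fv E ?f w = fv ?E f w"
  proof -
    fix w assume w: "w \<notin> insert v (nb E v)"
    then have "w \<noteq> y" "w \<notin> P" using yn Pint by auto
    then show "fv E ?f w = fv ?E f w" using L[of w] w by simp
  qed
  have b1: "1 \<le> fv ?E f b"
  proof -
    have "int (degree E b) = int (degree ?E b) + 1" using LD[of b] bne bv byy xP by simp
    then show ?thesis using f'(3) db by simp
  qed
  have x2: "2 \<le> fv E ?f x"
  proof -
    have "int (degree E x) = int (degree ?E x) + 1" using LD[of x] xv' xn xy xP by simp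
    then have "degree E x = Suc (degree ?E x)" by linarith
    then have "odd (degree ?E x)" using evx by simp
    moreover have "0 \<le> fv ?E f x" using f'(2) xv' by simp
    ultimately have "1 \<le> fv ?E f x" using odd_ge1[OF _ f'(1)] fin by simp
    then show ?thesis using fvx by simp
  qed
  have SP: "- 1 \<le> (\<Sum>a\<in>P. \<tau> a)" "(\<Sum>a\<in>P. \<tau> a) \<le> 0" using B \<tau>P by auto
  have a: "\<forall>w\<in>V. 0 \<le> fv E ?f w"
  proof
    fix w assume w: "w \<in> V"
    show "0 \<le> fv E ?f w"
    proof (cases "w = v")
      case True then show ?thesis using fvv SP by simp
    next
      case wv: False
      then have w0: "0 \<le> fv ?E f w" using f'(2) w by simp
      show ?thesis
      proof (cases "w \<in> nb E v")
        case False then show ?thesis using fvo w0 wv by simp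
      next
        case True
        then have "w = x \<or> w = y \<or> w = b \<or> w \<in> P" using nbv by auto
        then show ?thesis using fvx fvy fvb fvP w0 b1 SP by auto
      qed
    qed
  qed
  have y0: "0 \<le> fv ?E f y" using f'(2) yv' by simp
  have y1: "1 \<le> fv E ?f y" using fvy y0 SP by simp
  have cd: "int (card (V - {v})) = int (card V) - 1" using card_del[OF finV xv'(3)] .
  have c: "fG E ?f \<le> int (card V) - 1" using LG sumN f'(4) cd by simp
  have "PP V E x y ?f" unfolding PP_def PS_def using pmf a x2 y1 c by auto
  then show ?thesis by blast
qed

lemma PP_RDY:
  assumes s: "simple_graph V E" and xv: "{x,v} \<in> E" and yv: "{y,v} \<notin> E" and vy: "v \<noteq> y"
    and xy: "x \<noteq> y" and yV: "y \<in> V"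
    and Psub: "nb E v - {x} \<subseteq> nb E y"
    and cnd: "odd (card (nb E v - {x})) \<or> \<not> (nb E y \<subseteq> nb E v - {x})"
    and evx: "even (degree E x)"
    and IH: "\<exists>f. PP (V - {v}) (E - FP E v y (nb E v - {x})) y y f"
  shows "\<exists>f. PP V E x y f"
proof -
  define P where "P = nb E v - {x}"
  have fin: "finite E" using sg_finE[OF s] .
  have finV: "finite V" using sg_finV[OF s] .
  have xv': "x \<noteq> v" "x \<in> V" "v \<in> V" using sg_mem[OF s xv] by auto
  have xn: "x \<in> nb E v" using xv unfolding nb_def by (simp add: insert_commute)
  have yn: "y \<notin> nb E v" using yv unfolding nb_def by (simp add: insert_commute)
  have Pint: "P \<subseteq> nb E v \<inter> nb E y" using Psub unfolding P_def by auto
  have fP: "finite P" using FP_facts(2)[OF s vy Pint] .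
  have xP: "x \<notin> P" "y \<notin> P" "v \<notin> P" unfolding P_def using nb_irr[OF s] yn by auto
  obtain B where B: "B \<subseteq> P" "- 1 \<le> (\<Sum>a\<in>P. (if a \<in> B then 1 else -1::int))"
      "(\<Sum>a\<in>P. (if a \<in> B then 1 else -1::int)) \<le> 0"
      "odd (card P) \<Longrightarrow> (\<Sum>a\<in>P. (if a \<in> B then 1 else -1::int)) = -1" using half_split[OF fP] by blast
  define \<tau> where "\<tau> = (\<lambda>u. if u \<in> P then (if u \<in> B then 1 else -1) else (1::int))"
  have \<tau>x: "\<tau> x = 1" unfolding \<tau>_def using xP by auto
  have \<tau>P: "(\<Sum>a\<in>P. \<tau> a) = (\<Sum>a\<in>P. (if a \<in> B then 1 else -1::int))"
    by (rule sum.cong) (auto simp: \<tau>_def)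
  have nbv: "nb E v = insert x P" unfolding P_def using xn by auto
  have sumN: "(\<Sum>u\<in>nb E v. \<tau> u) = 1 + (\<Sum>a\<in>P. \<tau> a)"
    unfolding nbv using fP xP \<tau>x by simp
  obtain f where f: "PP (V - {v}) (E - FP E v y P) y y f" using IH unfolding P_def by blast
  let ?E = "E - FP E v y P" and ?f = "lab (FP E v y P) (gP v y \<tau>) f"
  have L: "\<And>w. fv E ?f w = fv ?E f w +
      ((if w = v then (\<Sum>u\<in>nb E v. \<tau> u) else if w \<in> nb E v then \<tau> w else 0)
     + (if w = y then - (\<Sum>a\<in>P. \<tau> a) else if w \<in> P then - \<tau> w else 0))"
    using FP_lift(1)[OF s vy Pint] .
  have LG: "fG E ?f = fG ?E f + (\<Sum>u\<in>nb E v. \<tau> u) - (\<Sum>a\<in>P. \<tau> a)"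
    using FP_lift(2)[OF s vy Pint] .
  have LD: "\<And>w. int (degree E w) = int (degree ?E w) +
      ((if w = v then int (card (nb E v)) else if w \<in> nb E v then 1 else 0)
     + (if w = y then int (card P) else if w \<in> P then 1 else 0))"
    using FP_lift(3)[OF s vy Pint] .
  have L0: "fv ?E f v = 0" using FP_lift(4)[OF s vy Pint] .
  have f': "pm_one ?E f" "\<forall>w\<in>V - {v}. 0 \<le> fv ?E f w" "1 \<le> degree ?E y \<longrightarrow> 1 \<le> fv ?E f y"
      "fG ?E f \<le> int (card (V - {v})) - 1"
    using f unfolding PP_def PS_def by auto
  have pmf: "pm_one E ?f"
  proof (rule pm_lab[OF f'(1)])
    show "\<forall>e\<in>FP E v y P. gP v y \<tau> e = 1 \<or> gP v y \<tau> e = -1"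
      unfolding gP_def \<tau>_def by auto
  qed
  have SP: "- 1 \<le> (\<Sum>a\<in>P. \<tau> a)" "(\<Sum>a\<in>P. \<tau> a) \<le> 0" using B \<tau>P by auto
  have fvv: "fv E ?f v = 1 + (\<Sum>a\<in>P. \<tau> a)" using L[of v] L0 sumN vy xP by simp
  have fvx: "fv E ?f x = fv ?E f x + 1" using L[of x] xv' xn \<tau>x xy xP by simp
  have fvy: "fv E ?f y = fv ?E f y - (\<Sum>a\<in>P. \<tau> a)" using L[of y] vy yn by simp
  have fvP: "\<And>a. a \<in> P \<Longrightarrow> fv E ?f a = fv ?E f a"
  proof -
    fix a assume a: "a \<in> P"
    then have "a \<noteq> v" "a \<in> nb E v" "a \<noteq> y" using xP Pint by auto
    then show "fv E ?f a = fv ?E f a" using L[of a] a by simp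
  qed
  have fvo: "\<And>w. w \<notin> insert v (nb E v) \<Longrightarrow> w \<noteq> y \<Longrightarrow> fv E ?f w = fv ?E f w"
  proof -
    fix w assume w: "w \<notin> insert v (nb E v)" "w \<noteq> y"
    then have "w \<notin> P" using Pint by auto
    then show "fv E ?f w = fv ?E f w" using L[of w] w by simp
  qed
  have x2: "2 \<le> fv E ?f x"
  proof -
    have "int (degree E x) = int (degree ?E x) + 1" using LD[of x] xv' xn xy xP by simp
    then have "degree E x = Suc (degree ?E x)" by linarith
    then have "odd (degree ?E x)" using evx by simp
    moreover have "0 \<le> fv ?E f x" using f'(2) xv' by simp
    ultimately have "1 \<le> fv ?E f x" using odd_ge1[OF _ f'(1)] fin by simp
    then show ?thesis using fvx by simp
  qed
  have y0: "0 \<le> fv ?E f y" using f'(2) yV vy by simp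
  have y1: "1 \<le> fv E ?f y"
  proof (cases "odd (card P)")
    case True
    then have "(\<Sum>a\<in>P. \<tau> a) = -1" using B(4) \<tau>P by simp
    then show ?thesis using fvy y0 by simp
  next
    case False
    then have "\<not> (nb E y \<subseteq> P)" using cnd unfolding P_def by simp
    then obtain w where w: "w \<in> nb E y" "w \<notin> P" by blast
    have "P \<subset> nb E y" using Pint w by blast
    then have "card P < card (nb E y)" using nb_fin[OF s] by (simp add: psubset_card_mono)
    moreover have "int (degree E y) = int (degree ?E y) + int (card P)" using LD[of y] vy yn by simp
    moreover have "degree E y = card (nb E y)" using deg_nb[OF s] .
    ultimately have "1 \<le> degree ?E y" by linarith
    then have "1 \<le> fv ?E f y" using f'(3) by simp
    then show ?thesis using fvy SP by simp
  qed
  have a: "\<forall>w\<in>V. 0 \<le> fv E ?f w"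
  proof
    fix w assume w: "w \<in> V"
    show "0 \<le> fv E ?f w"
    proof (cases "w = v")
      case True then show ?thesis using fvv SP by simp
    next
      case wv: False
      then have w0: "0 \<le> fv ?E f w" using f'(2) w by simp
      show ?thesis
      proof (cases "w = y")
        case True then show ?thesis using y1 by simp
      next
        case wy: False
        show ?thesis
        proof (cases "w \<in> nb E v")
          case False then show ?thesis using fvo w0 wv wy by simp
        next
          case True
          then have "w = x \<or> w \<in> P" using nbv by auto
          then show ?thesis using fvx fvP w0 by auto
        qed
      qed
    qed
  qed
  have cd: "int (card (V - {v})) = int (card V) - 1" using card_del[OF finV xv'(3)] .
  have c: "fG E ?f \<le> int (card V) - 1" using LG sumN f'(4) cd by simp
  have "PP V E x y ?f" unfolding PP_def PS_def using pmf a x2 y1 c by auto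
  then show ?thesis by blast
qed

lemma edge_at: "simple_graph V E \<Longrightarrow> e \<in> E \<Longrightarrow> v \<in> e \<Longrightarrow> \<exists>u\<in>nb E v. e = {v,u}"
proof -
  assume s: "simple_graph V E" and e: "e \<in> E" "v \<in> e"
  then have "e \<in> inc_edges E v" by (simp add: inc_edges_def)
  then show ?thesis using inc_nb[OF s] by blast
qed

lemma nb_edge: "u \<in> nb E v \<Longrightarrow> {v,u} \<in> E" unfolding nb_def by simp

lemma nb_edge': "u \<in> nb E v \<Longrightarrow> {u,v} \<in> E" unfolding nb_def by (simp add: insert_commute)

lemma hard_case:
  fixes V :: "'a set"
  assumes s: "simple_graph V E"
    and IH: "\<And>(V'::'a set) E' x' y'. card V' + card E' < card V + card E \<Longrightarrow> simple_graph V' E' \<Longrightarrow> V' \<noteq> {}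
               \<Longrightarrow> \<exists>f. PP V' E' x' y' f"
    and md: "\<forall>u\<in>V. 2 \<le> degree E u"
    and xV: "x \<in> V" and yV: "y \<in> V" and xy: "x \<noteq> y"
    and evx: "even (degree E x)" and evy: "even (degree E y)"
  shows "\<exists>f. PP V E x y f"
proof -
  have fin: "finite E" using sg_finE[OF s] .
  have finV: "finite V" using sg_finV[OF s] .
  have dx: "2 \<le> degree E x" "2 \<le> degree E y" using md xV yV by auto
  have IHsub: "\<And>F x' y'. F \<subseteq> E \<Longrightarrow> F \<noteq> {} \<Longrightarrow> \<exists>f. PP V (E - F) x' y' f"
  proof -
    fix F x' y' assume F: "F \<subseteq> E" "F \<noteq> {}"
    have lt: "card V + card (E - F) < card V + card E" using card_Ediff[OF fin F] by simp
    have s': "simple_graph V (E - F)" by (rule sg_sub[OF s])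
    have ne: "V \<noteq> {}" using xV by blast
    show "\<exists>f. PP V (E - F) x' y' f" by (rule IH[OF lt s' ne])
  qed
  show ?thesis
  proof (cases "{y,x} \<in> E")
    case True
    obtain a where ya: "{y,a} \<in> E" "a \<noteq> x" using deg2_other[OF s dx(2)] by blast
    have aV: "a \<in> V" using sg_mem[OF s ya(1)] by simp
    obtain f where "PP V (E - {{y,x},{y,a}}) a y f" using IHsub[of "{{y,x},{y,a}}" a y] True ya by auto
    then show ?thesis using PP_p3[OF s True ya(1) ya(2)[symmetric] _ evx] md aV by blast
  next
    case nxy: False
    define bad where "bad v \<longleftrightarrow> {y,v} \<notin> E \<and> nb E v - {x} = nb E y \<and> even (card (nb E y))" for v
    have key: "\<And>v. v \<in> nb E x \<Longrightarrow> (\<exists>f. PP V E x y f) \<or> bad v"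
    proof -
      fix v assume vn: "v \<in> nb E x"
      have xv: "{x,v} \<in> E" using nb_edge[OF vn] .
      have vx: "{v,x} \<in> E" using nb_edge'[OF vn] .
      have xv': "x \<noteq> v" "v \<in> V" using sg_mem[OF s xv] by auto
      have vy: "v \<noteq> y" using nxy xv by (auto simp: insert_commute)
      have xnv: "x \<in> nb E v" using vx unfolding nb_def by simp
      show "(\<exists>f. PP V E x y f) \<or> bad v"
      proof (cases "\<exists>a\<in>nb E v - {x,y}. {y,a} \<notin> E")
        case True
        then obtain a where a: "a \<in> nb E v" "a \<noteq> x" "a \<noteq> y" "{y,a} \<notin> E" by blast
        have va: "{v,a} \<in> E" using nb_edge[OF a(1)] .
        have aV: "a \<in> V" using sg_mem[OF s va] by simp
        obtain f where "PP V (E - {{v,x},{v,a}}) a y f" using IHsub[of "{{v,x},{v,a}}" a y] vx va by auto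
        moreover have "y = v \<or> (y \<noteq> v \<and> y \<noteq> x \<and> y \<noteq> a \<and> {y,a} \<notin> E)" using vy xy a by auto
        ultimately have "\<exists>f. PP V E x y f" using PP_p3[OF s vx va a(2)[symmetric] _ evx] md aV by blast
        then show ?thesis by blast
      next
        case False
        then have Psub: "nb E v - {x,y} \<subseteq> nb E y" unfolding nb_def by auto
        show ?thesis
        proof (cases "{y,v} \<in> E")
          case yv: True
          have ynv: "y \<in> nb E v" using yv unfolding nb_def by (simp add: insert_commute)
          show ?thesis
          proof (cases "nb E v - {x,y} = {}")
            case True
            then have nbv: "nb E v = {x,y}" using xnv ynv by auto
            have dv: "degree E v = 2" using deg_nb[OF s] nbv xy by simp
            obtain z where yz: "{y,z} \<in> E" "z \<noteq> v" using deg2_other[OF s dx(2)] by blast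
            have zx: "z \<noteq> x" using yz(1) nxy by auto
            have zV: "z \<in> V" using sg_mem[OF s yz(1)] by simp
            have vy': "{v,y} \<in> E" using yv by (simp add: insert_commute)
            let ?F = "{{v,x},{v,y},{y,z}}"
            have ve: "\<forall>e\<in>E. v \<in> e \<longrightarrow> e \<in> ?F"
            proof (intro ballI impI)
              fix e assume "e \<in> E" "v \<in> e"
              then obtain u where "u \<in> nb E v" "e = {v,u}" using edge_at[OF s] by blast
              then show "e \<in> ?F" using nbv by auto
            qed
            have s': "simple_graph (V - {v}) (E - ?F)" using sg_del[OF s ve] .
            have lt: "card (V - {v}) + card (E - ?F) < card V + card E"
            proof -
              have "card (V - {v}) < card V" using card_Diff1_less[OF finV xv'(2)] .
              moreover have "card (E - ?F) \<le> card E" using fin by (simp add: card_mono)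
              ultimately show ?thesis by simp
            qed
            have ne': "V - {v} \<noteq> {}" using xV xv'(1) by blast
            obtain f where "PP (V - {v}) (E - ?F) z y f" using IH[OF lt s' ne'] by blast
            then have "\<exists>f. PP V E x y f" using PP_RV2[OF s vx vy' dv yz(1) yz(2) zx xy evx] md zV by blast
            then show ?thesis by blast
          next
            case False
            then obtain b where b: "b \<in> nb E v" "b \<noteq> x" "b \<noteq> y" by blast
            have bV: "b \<in> V" using sg_mem[OF s nb_edge[OF b(1)]] by simp
            define P where "P = nb E v - {x,y,b}"
            have Pint: "P \<subseteq> nb E v \<inter> nb E y" using Psub unfolding P_def by auto
            have vy2: "v \<noteq> y" using vy .
            have s': "simple_graph (V - {v}) (E - FP E v y P)" using FP_lift(5)[OF s vy2 Pint] .
            have lt: "card (V - {v}) + card (E - FP E v y P) < card V + card E"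
              using FP_card_lt[OF s vy2 Pint xv'(2)] .
            have ne': "V - {v} \<noteq> {}" using xV xv'(1) by blast
            have IH': "\<exists>f. PP (V - {v}) (E - FP E v y (nb E v - {x,y,b})) b b f"
              using IH[OF lt s' ne'] unfolding P_def by blast
            have Psub': "nb E v - {x,y,b} \<subseteq> nb E y" using Psub by auto
            have "\<exists>f. PP V E x y f" using PP_RVY[OF s xv yv xy b(1) b(2) b(3) Psub' evx _ IH'] md bV by blast
            then show ?thesis by blast
          qed
        next
          case yv: False
          have ynv: "y \<notin> nb E v" using yv unfolding nb_def by (simp add: insert_commute)
          have Psub2: "nb E v - {x} \<subseteq> nb E y" using Psub ynv by auto
          show ?thesis
          proof (cases "odd (card (nb E v - {x})) \<or> \<not> (nb E y \<subseteq> nb E v - {x})")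
            case True
            define P where "P = nb E v - {x}"
            have Pint: "P \<subseteq> nb E v \<inter> nb E y" using Psub2 unfolding P_def by auto
            have s': "simple_graph (V - {v}) (E - FP E v y P)" using FP_lift(5)[OF s vy Pint] .
            have lt: "card (V - {v}) + card (E - FP E v y P) < card V + card E"
              using FP_card_lt[OF s vy Pint xv'(2)] .
            have ne': "V - {v} \<noteq> {}" using xV xv'(1) by blast
            have IH': "\<exists>f. PP (V - {v}) (E - FP E v y (nb E v - {x})) y y f"
              using IH[OF lt s' ne'] unfolding P_def by blast
            have "\<exists>f. PP V E x y f" using PP_RDY[OF s xv yv vy xy yV Psub2 True evx IH'] .
            then show ?thesis by blast
          next
            case False
            then have "nb E v - {x} = nb E y" "even (card (nb E y))" using Psub2 by auto
            then have "bad v" unfolding bad_def using yv by simp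
            then show ?thesis by blast
          qed
        qed
      qed
    qed
    obtain v1 where v1: "{x,v1} \<in> E" using deg_nb_ex[OF s] dx(1) by fastforce
    have v1n: "v1 \<in> nb E x" using v1 unfolding nb_def by simp
    obtain v2 where v2: "{x,v2} \<in> E" "v2 \<noteq> v1" using deg2_other[OF s dx(1)] by blast
    have v2n: "v2 \<in> nb E x" using v2(1) unfolding nb_def by simp
    show ?thesis
    proof (cases "bad v1 \<and> bad v2")
      case False then show ?thesis using key[OF v1n] key[OF v2n] by blast
    next
      case True
      then have b1: "{y,v1} \<notin> E" "nb E v1 - {x} = nb E y" and b2: "nb E v2 - {x} = nb E y"
        unfolding bad_def by auto
      obtain a where ya: "{y,a} \<in> E" using deg_nb_ex[OF s] dx(2) by fastforce
      obtain a' where ya': "{y,a'} \<in> E" "a' \<noteq> a" using deg2_other[OF s dx(2)] by blast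
      have an: "a \<in> nb E y" "a' \<in> nb E y" using ya ya' unfolding nb_def by auto
      have e1: "{v1,a} \<in> E" using an(1) b1(2) unfolding nb_def by blast
      have e2: "{a,v2} \<in> E" using an(1) b2 unfolding nb_def by (auto simp: insert_commute)
      have e3: "{v2,a'} \<in> E" using an(2) b2 unfolding nb_def by blast
      have e4: "{a',v1} \<in> E" using an(2) b1(2) unfolding nb_def by (auto simp: insert_commute)
      have ax: "a \<noteq> x" "a' \<noteq> x" using ya ya' nxy by auto
      have ay: "a \<noteq> y" "a' \<noteq> y" using an nb_irr[OF s] by auto
      have v1x: "v1 \<noteq> x" "v2 \<noteq> x" using sg_mem[OF s v1] sg_mem[OF s v2(1)] by auto
      have v1y: "v1 \<noteq> y" "v2 \<noteq> y" using v1 v2(1) nxy by (auto simp: insert_commute)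
      have xn: "x \<notin> {v1,a,v2,a'}" using ax v1x by auto
      have yn: "y \<notin> {v1,a,v2,a'}" using ay v1y by auto
      let ?F = "{{v1,a},{a,v2},{v2,a'},{a',v1}}"
      obtain f where "PP V (E - ?F) x y f" using IHsub[of ?F x y] e1 e2 e3 e4 by auto
      then have "PP V E x y (lab ?F (\<lambda>e. if e = {v1,a} \<or> e = {v2,a'} then 1 else -1) f)"
        using PP_C4[OF s e1 e2 e3 e4 v2(2)[symmetric] ya'(2)[symmetric] xn yn] by blast
      then show ?thesis by blast
    qed
  qed
qed

lemma PPmain:
  fixes V :: "'a set"
  shows "simple_graph V E \<Longrightarrow> V \<noteq> {} \<Longrightarrow> \<exists>f. PP V E x y f"
proof (induction "card V + card E" arbitrary: V E x y rule: less_induct)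
  case less
  note s = less.prems(1) and ne = less.prems(2)
  have IH: "\<And>(V'::'a set) E' x' y'. card V' + card E' < card V + card E \<Longrightarrow> simple_graph V' E' \<Longrightarrow> V' \<noteq> {}
               \<Longrightarrow> \<exists>f. PP V' E' x' y' f" using less.hyps by blast
  have fin: "finite E" using sg_finE[OF s] .
  have finV: "finite V" using sg_finV[OF s] .
  show ?case
  proof (cases "E = {}")
    case True
    have "PP V {} x y (\<lambda>_. 1)" using PP_empty s ne True by simp
    then show ?thesis using True by blast
  next
    case Ene: False
    show ?thesis
    proof (cases "\<exists>u\<in>V. degree E u = 0 \<and> 2 \<le> card V")
      case True
      then obtain u where u: "u \<in> V" "degree E u = 0" "2 \<le> card V" by blast
      have ue: "\<forall>e\<in>E. u \<in> e \<longrightarrow> e \<in> {}" using deg0_inc[OF fin u(2)] by blast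
      have s': "simple_graph (V - {u}) E" using sg_del[OF s ue] by simp
      have ne': "V - {u} \<noteq> {}"
      proof
        assume "V - {u} = {}"
        then have "V \<subseteq> {u}" by blast
        then have "card V \<le> 1" using card_mono[of "{u}" V] by simp
        then show False using u(3) by simp
      qed
      have lt: "card (V - {u}) + card E < card V + card E" using card_Diff1_less[OF finV u(1)] by simp
      obtain f where "PP (V - {u}) E x y f" using IH[OF lt s' ne'] by blast
      then show ?thesis using PP_iso[OF s u(1) u(2)] by blast
    next
      case noiso: False
      show ?thesis
      proof (cases "\<exists>u\<in>V. degree E u = 1")
        case True
        then obtain u where u: "u \<in> V" "degree E u = 1" by blast
        have "\<exists>w. {u,w} \<in> E" using deg_nb_ex[OF s, of u] u(2) by simp
        then obtain w where uw: "{u,w} \<in> E" by blast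
        have uw': "u \<noteq> w" "w \<in> V" using sg_mem[OF s uw] by auto
        have s': "simple_graph (V - {u}) (E - {{u,w}})" using sg_del[OF s leaf_edges[OF s uw u(2)]] .
        have ne': "V - {u} \<noteq> {}" using uw' by blast
        have lt: "card (V - {u}) + card (E - {{u,w}}) < card V + card E"
        proof -
          have "card (V - {u}) < card V" using card_Diff1_less[OF finV u(1)] .
          moreover have "card (E - {{u,w}}) \<le> card E" using fin by (simp add: card_mono)
          ultimately show ?thesis by simp
        qed
        obtain f where "PP (V - {u}) (E - {{u,w}}) x y f" using IH[OF lt s' ne'] by blast
        then show ?thesis using PP_leaf[OF s uw u(2)] by blast
      next
        case noleaf: False
        obtain e0 where e0: "e0 \<in> E" using Ene by blast
        obtain p q where pq: "e0 = {p,q}" "p \<noteq> q" "p \<in> V" "q \<in> V" using sg_edge[OF s e0] by blast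
        have cV: "2 \<le> card V"
        proof -
          have "{p,q} \<subseteq> V" using pq by simp
          then have "card {p,q} \<le> card V" using finV by (simp add: card_mono)
          then show ?thesis using pq(2) by simp
        qed
        have md: "\<forall>u\<in>V. 2 \<le> degree E u" using noiso noleaf cV by force
        show ?thesis
        proof (cases "odd (degree E y) \<or> degree E y = 0 \<or> x = y")
          case True
          obtain f where "PS V E x f" using PhiS[OF s ne] by blast
          then show ?thesis using PP_vac1[OF s _ True] by blast
        next
          case Fy: False
          show ?thesis
          proof (cases "odd (degree E x) \<or> degree E x = 0")
            case True
            obtain f where "PS V E y f" using PhiS[OF s ne] by blast
            then show ?thesis using PP_vac2[OF s _ True] by blast
          next
            case Fx: False
            have xV: "x \<in> V" using deg_pos_mem[OF s] Fx by (metis less_one not_le)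
            have yV: "y \<in> V" using deg_pos_mem[OF s] Fy by (metis less_one not_le)
            show ?thesis using hard_case[OF s IH md xV yV] Fx Fy by blast
          qed
        qed
      qed
    qed
  qed
qed

lemma edge_deg: "simple_graph V E \<Longrightarrow> {u,w} \<in> E \<Longrightarrow> 1 \<le> degree E u"
proof -
  assume s: "simple_graph V E" and e: "{u,w} \<in> E"
  have "w \<in> nb E u" using e unfolding nb_def by simp
  then have "nb E u \<noteq> {}" by blast
  then have "card (nb E u) \<noteq> 0" using nb_fin[OF s] by simp
  then show ?thesis using deg_nb[OF s] by simp
qed

lemma fG_bound: "finite E \<Longrightarrow> pm_one E g \<Longrightarrow> fG E g \<in> {- int (card E) .. int (card E)}"
proof -
  assume fin: "finite E" and pm: "pm_one E g"
  have up: "fG E g \<le> of_nat (card E) * 1"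
    unfolding fG_def by (rule sum_bounded_above) (use pm in \<open>auto simp: pm_one_def\<close>)
  have lo: "of_nat (card E) * (-1) \<le> fG E g"
    unfolding fG_def by (rule sum_bounded_below) (use pm in \<open>auto simp: pm_one_def\<close>)
  show ?thesis using up lo by simp
qed

theorem proposition5p1:
  fixes V :: "'a set" and E :: "'a set set"
  assumes "simple_graph V E"
    and "v_even V E = 2"
  shows "(\<exists>f\<in>SEDF0 V E. fG E f \<le> int (card V) - 1)
         \<and> gamma_s' E \<le> int (card V) - 1"
proof -
  note s = assms(1)
  have fin: "finite E" using sg_finE[OF s] .
  have "card {v \<in> V. even (degree E v)} = 2" using assms(2) unfolding v_even_def .
  then obtain x y where xy: "{v \<in> V. even (degree E v)} = {x,y}" "x \<noteq> y"
    by (auto simp: card_2_iff)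
  have xV: "x \<in> V" "even (degree E x)" "y \<in> V" "even (degree E y)" using xy(1) by blast+
  have oddo: "\<And>w. w \<in> V \<Longrightarrow> w \<noteq> x \<Longrightarrow> w \<noteq> y \<Longrightarrow> odd (degree E w)" using xy(1) by blast
  have ne: "V \<noteq> {}" using xV by blast
  obtain f where f: "PP V E x y f" using PPmain[OF s ne] by blast
  have pm: "pm_one E f" and a: "\<forall>w\<in>V. 0 \<le> fv E f w" and dsg: "1 \<le> degree E x \<longrightarrow> 1 \<le> fv E f x"
    and cost: "fG E f \<le> int (card V) - 1"
    and soft: "fv E f y = 0 \<longrightarrow> (\<forall>z. {y,z} \<in> E \<longrightarrow> f {y,z} = 1 \<longrightarrow> 2 \<le> fv E f z)"
    using f unfolding PP_def PS_def by auto
  have low: "\<And>z. z \<in> V \<Longrightarrow> z \<noteq> y \<Longrightarrow> 1 \<le> degree E z \<Longrightarrow> 1 \<le> fv E f z"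
  proof -
    fix z assume z: "z \<in> V" "z \<noteq> y" "1 \<le> degree E z"
    show "1 \<le> fv E f z"
    proof (cases "z = x")
      case True then show ?thesis using dsg z by simp
    next
      case False
      then have "odd (degree E z)" using oddo z by blast
      then show ?thesis using odd_ge1[OF fin pm] a z by simp
    qed
  qed
  have ylow: "fv E f y = 0 \<or> 2 \<le> fv E f y"
  proof (cases "fv E f y = 0")
    case False
    then have "1 \<le> fv E f y" using a xV by force
    then show ?thesis using even_ge2[OF fin pm xV(4)] by simp
  qed simp
  have b: "\<forall>u w. {u,w} \<in> E \<and> f {u,w} = 1 \<longrightarrow> 2 \<le> fv E f u + fv E f w"
  proof (intro allI impI)
    fix u w assume h: "{u,w} \<in> E \<and> f {u,w} = 1"
    have uw: "u \<noteq> w" "u \<in> V" "w \<in> V" using sg_mem[OF s] h by blast+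
    have du: "1 \<le> degree E u" using edge_deg[OF s] h by blast
    have wu: "{w,u} \<in> E" "f {w,u} = 1" using h by (simp_all add: insert_commute)
    have dw: "1 \<le> degree E w" using edge_deg[OF s wu(1)] .
    show "2 \<le> fv E f u + fv E f w"
    proof (cases "u = y")
      case True
      show ?thesis
      proof (cases "fv E f y = 0")
        case True
        then have "2 \<le> fv E f w" using soft h \<open>u = y\<close> by blast
        then show ?thesis using True \<open>u = y\<close> by simp
      next
        case False
        then have "2 \<le> fv E f u" using ylow \<open>u = y\<close> by simp
        then show ?thesis using a uw by force
      qed
    next
      case uy: False
      show ?thesis
      proof (cases "w = y")
        case True
        show ?thesis
        proof (cases "fv E f y = 0")
          case True
          then have "2 \<le> fv E f u" using soft wu \<open>w = y\<close> by blast
          then show ?thesis using True \<open>w = y\<close> by simp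
        next
          case False
          then have "2 \<le> fv E f w" using ylow \<open>w = y\<close> by simp
          then show ?thesis using a uw by force
        qed
      next
        case False
        then show ?thesis using low[OF uw(2) uy du] low[OF uw(3) False dw] by simp
      qed
    qed
  qed
  have sedf0: "f \<in> SEDF0 V E" unfolding SEDF0_def using pm a b by blast
  have sedf: "is_SEDF E f"
  proof -
    have "\<forall>u v. {u, v} \<in> E \<longrightarrow> 1 \<le> (\<Sum>e\<in>inc_edges E u \<union> inc_edges E v. f e)"
    proof (intro allI impI)
      fix u v assume e: "{u,v} \<in> E"
      have uv: "u \<noteq> v" "u \<in> V" "v \<in> V" using sg_mem[OF s e] by auto
      have f1: "finite (inc_edges E u)" "finite (inc_edges E v)" using fin by (simp_all add: inc_edges_def)
      have int: "inc_edges E u \<inter> inc_edges E v = {{u,v}}"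
      proof
        show "inc_edges E u \<inter> inc_edges E v \<subseteq> {{u,v}}"
        proof
          fix d assume d: "d \<in> inc_edges E u \<inter> inc_edges E v"
          then have dE: "d \<in> E" "u \<in> d" "v \<in> d" by (auto simp: inc_edges_def)
          obtain p q where pq: "d = {p,q}" "p \<noteq> q" using sg_edge[OF s dE(1)] by blast
          then have "d = {u,v}" using dE uv(1) by auto
          then show "d \<in> {{u,v}}" by simp
        qed
        show "{{u,v}} \<subseteq> inc_edges E u \<inter> inc_edges E v" using e by (auto simp: inc_edges_def)
      qed
      have "(\<Sum>e\<in>inc_edges E u \<union> inc_edges E v. f e) = fv E f u + fv E f v - f {u,v}"
        unfolding fv_def using sum_Un[OF f1, of f] int by simp
      moreover have "f {u,v} = 1 \<or> f {u,v} = -1" using pm e unfolding pm_one_def by blast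
      moreover have "f {u,v} = 1 \<longrightarrow> 2 \<le> fv E f u + fv E f v" using b e by blast
      moreover have "0 \<le> fv E f u" "0 \<le> fv E f v" using a uv by auto
      ultimately show "1 \<le> (\<Sum>e\<in>inc_edges E u \<union> inc_edges E v. f e)" by auto
    qed
    then show ?thesis unfolding is_SEDF_def using pm by blast
  qed
  have gam: "gamma_s' E \<le> fG E f"
  proof -
    have sub: "fG E ` {g. is_SEDF E g} \<subseteq> {- int (card E) .. int (card E)}"
      using fG_bound[OF fin] unfolding is_SEDF_def by blast
    have fS: "finite (fG E ` {g. is_SEDF E g})" using finite_subset[OF sub] by simp
    have "fG E f \<in> fG E ` {g. is_SEDF E g}" using sedf by blast
    then show ?thesis unfolding gamma_s'_def using Min_le[OF fS] by blast
  qed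
  show ?thesis using sedf0 cost gam by force
qed


end
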